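(* Let $\alpha$ be a filter of length $l+1$ and order $p\ge 1$, and let $q\ge 1$ be an integer. If $H<p-\frac{1}{4q}$, then $$\frac{1}{N-l}\sum_{i,j=l}^{N}\big(\rho^{\alpha,N}_H(j-i)\big)^{2q}\;\xrightarrow[N\to\infty]{}\;\sum_{v\in\mathbb Z}\varphi_{H,\alpha}(v)^{2q}<\infty .$$ Equivalently, with $f_{N,2q}:=\frac{c^k_{2q}}{(2q)!}\frac{1}{N-l}\sum_{i=l}^N \frac{C_{i,\alpha}^{\otimes 2q}}{(\pi^{\alpha,N}_H(0))^{q}}$, one has $(N-l)(2q)!\|f_{N,2q}\|^2_{\mathcal H^{\otimes 2q}}\to \frac{(c^k_{2q})^2}{(2q)!}\sum_{v\in\mathbb Z}\varphi_{H,\alpha}(v)^{2q}$. In the case $p=q=1$, $H=3/4$, the quantity $\frac{1}{(N-l)\log(N-l)}\sum_{i,j=l}^{N}\big(\rho^{\alpha,N}_H(j-i)\big)^{2}$ converges, as $N\to\infty$, to a finite strictly positive constant.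
   Context: Fix $H\in(1/2,1)$. Let $W^H=\{W^H_s(A): s\ge 0, A\in\mathcal B_b(\mathbb R)\}$ be a centered Gaussian field with $\mathbf E[W^H_s(A)W^H_r(B)]=R_H(s,r)\lambda(A\cap B)$, where $R_H(s,r)=\frac12(s^{2H}+r^{2H}-|s-r|^{2H})$ and $\lambda$ is Lebesgue measure. Let $u(t,x)=\int_0^t\int_{\mathbb R}G_1(t-s,x-y)\,W^H(ds,dy)$ (Wiener integral), with $G_1(t,x)=\frac12\mathbf 1_{\{|x|<t\}}$; this is the mild solution of $\partial_t^2 u=\partial_x^2u+\dot W^H$ on $\mathbb R$ with zero initial position and velocity. Fix $t>1$. For $x,y\in[0,1]$, $\mathbf E[u(t,x)u(t,y)]=\frac12\big(c_H|x-y|^{2H+1}-\frac t2|x-y|^{2H}+\frac{t^{2H+1}}{2H+1}\big)$ with $c_H=\frac{4H-1}{4(2H+1)}$. A filter of length $l+1$ ($l\ge 0$) and order $p\ge1$ is a vector $\alpha=(\alpha_0,\dots,\alpha_l)$ with $\sum_{q=0}^l\alpha_q q^r=0$ for $0\le r\le p-1$ and $\sum_{q=0}^l\alpha_q q^p\neq 0$ (convention $0^0=1$). For $N>l$ and $i=l,\dots,N$ set $U^\alpha(i/N)=\sum_{r=0}^l\alpha_r u(t,(i-r)/N)$. For $x>0$, $j\in\mathbb Z$ let $\Phi_{x,\alpha}(j)=\sum_{r_1,r_2=0}^l\alpha_{r_1}\alpha_{r_2}|j+r_1-r_2|^{2x}$ and $\varphi_{H,\alpha}(j)=\Phi_{H,\alpha}(j)/\Phi_{H,\alpha}(0)$.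 Then $\pi^{\alpha,N}_H(j):=\mathbf E[U^\alpha(i/N)U^\alpha((i+j)/N)]=k_1N^{-2H}\Phi_{H,\alpha}(j)+k_2N^{-2H-1}\Phi_{H+\frac12,\alpha}(j)$ with $k_1=-t/4$, $k_2=\frac{4H-1}{8(2H+1)}$, and $\rho^{\alpha,N}_H(j):=\pi^{\alpha,N}_H(j)/\pi^{\alpha,N}_H(0)$. $\mathcal H$ is the Hilbert space obtained as closure of the span of $\{e_x:x\in[0,1]\}$ with $\langle e_x,e_y\rangle=\mathbf E[u(t,x)u(t,y)]$, and $C_{i,\alpha}=\sum_{q=0}^l\alpha_q e_{(i-q)/N}$, so $\langle C_{i,\alpha},C_{j,\alpha}\rangle_{\mathcal H}=\pi^{\alpha,N}_H(j-i)$. For an integer $k\ge1$, $c^k_{2q}=\frac{1}{(2q)!}\prod_{i=0}^{q-1}(k-2i)$. *)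

theory Defs
  imports "HOL-Analysis.Analysis"
begin

text \<open>A filter alpha = (alpha_0,...,alpha_l) of length l+1 and order p
  (indices 0..l; values of alpha outside 0..l are irrelevant).  Note 0^0 = 1.\<close>
definition is_filter :: "(nat \<Rightarrow> real) \<Rightarrow> nat \<Rightarrow> nat \<Rightarrow> bool" where
  "is_filter \<alpha> l p \<longleftrightarrow>
     (\<forall>r<p. (\<Sum>q=0..l. \<alpha> q * real q ^ r) = 0) \<and> (\<Sum>q=0..l. \<alpha> q * real q ^ p) \<noteq> 0"

definition Phi :: "real \<Rightarrow> (nat \<Rightarrow> real) \<Rightarrow> nat \<Rightarrow> int \<Rightarrow> real" where
  "Phi x \<alpha> l j = (\<Sum>r1=0..l. \<Sum>r2=0..l.
      \<alpha> r1 * \<alpha> r2 * \<bar>real_of_int j + real r1 - real r2\<bar> powr (2 * x))"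

definition phi :: "real \<Rightarrow> (nat \<Rightarrow> real) \<Rightarrow> nat \<Rightarrow> int \<Rightarrow> real" where
  "phi H \<alpha> l j = Phi H \<alpha> l j / Phi H \<alpha> l 0"

text \<open>pi^{alpha,N}_H(j) = E[U^alpha(i/N) U^alpha((i+j)/N)], via the closed form,
  with k1 = -t/4 and k2 = (4H-1)/(8(2H+1)).\<close>
definition piN :: "real \<Rightarrow> real \<Rightarrow> (nat \<Rightarrow> real) \<Rightarrow> nat \<Rightarrow> nat \<Rightarrow> int \<Rightarrow> real" where
  "piN t H \<alpha> l N j =
     (- t / 4) * real N powr (- 2 * H) * Phi H \<alpha> l j
     + ((4 * H - 1) / (8 * (2 * H + 1))) * real N powr (- 2 * H - 1) * Phi (H + 1/2) \<alpha> l j"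

definition rhoN :: "real \<Rightarrow> real \<Rightarrow> (nat \<Rightarrow> real) \<Rightarrow> nat \<Rightarrow> nat \<Rightarrow> int \<Rightarrow> real" where
  "rhoN t H \<alpha> l N j = piN t H \<alpha> l N j / piN t H \<alpha> l N 0"

end

theory Submission
  imports Defs "HOL-Real_Asymp.Real_Asymp"
begin


definition mu :: "(nat \<Rightarrow> real) \<Rightarrow> nat \<Rightarrow> nat \<Rightarrow> real" where
  "mu \<alpha> l m = (\<Sum>q=0..l. \<alpha> q * real q ^ m)"

definition mom :: "(nat \<Rightarrow> real) \<Rightarrow> nat \<Rightarrow> nat \<Rightarrow> real" where
  "mom \<alpha> l k = (\<Sum>r1=0..l. \<Sum>r2=0..l. \<alpha> r1 * \<alpha> r2 * (real r1 - real r2) ^ k)"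

lemma mom_expand:
  "mom \<alpha> l k = (\<Sum>m\<le>k. real (k choose m) * mu \<alpha> l m * ((-1)^(k-m) * mu \<alpha> l (k-m)))"
proof -
  have "mom \<alpha> l k = (\<Sum>r1=0..l. \<Sum>r2=0..l. \<Sum>m\<le>k. real (k choose m) * (\<alpha> r1 * real r1 ^ m) * ((-1)^(k-m) * (\<alpha> r2 * real r2 ^ (k-m))))"
    unfolding mom_def
  proof (intro sum.cong refl)
    fix r1 r2
    have "(real r1 - real r2) ^ k = (real r1 + (- real r2)) ^ k" by simp
    also have "\<dots> = (\<Sum>m\<le>k. real (k choose m) * real r1 ^ m * (- real r2) ^ (k - m))"
      by (rule binomial_ring)
    finally have eq: "(real r1 - real r2) ^ k = (\<Sum>m\<le>k. real (k choose m) * real r1 ^ m * (- real r2) ^ (k - m))" .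
    show "\<alpha> r1 * \<alpha> r2 * (real r1 - real r2) ^ k = (\<Sum>m\<le>k. real (k choose m) * (\<alpha> r1 * real r1 ^ m) * ((-1)^(k-m) * (\<alpha> r2 * real r2 ^ (k-m))))"
      unfolding eq sum_distrib_left
      by (intro sum.cong refl) (simp only: power_minus[of "real r2"] mult.assoc mult.commute mult.left_commute)
  qed
  also have "\<dots> = (\<Sum>m\<le>k. \<Sum>r1=0..l. \<Sum>r2=0..l. real (k choose m) * (\<alpha> r1 * real r1 ^ m) * ((-1)^(k-m) * (\<alpha> r2 * real r2 ^ (k-m))))"
    by (simp only: sum.swap[of _ "{0..l}" "{..k}"])
  also have "\<dots> = (\<Sum>m\<le>k. real (k choose m) * mu \<alpha> l m * ((-1)^(k-m) * mu \<alpha> l (k-m)))"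
  proof (intro sum.cong refl)
    fix m
    have "mu \<alpha> l m * mu \<alpha> l (k-m) = (\<Sum>r1=0..l. \<Sum>r2=0..l. (\<alpha> r1 * real r1 ^ m) * (\<alpha> r2 * real r2 ^ (k-m)))"
      unfolding mu_def by (rule sum_product)
    have "real (k choose m) * mu \<alpha> l m * ((-1)^(k-m) * mu \<alpha> l (k-m)) = (real (k choose m) * (-1)^(k-m)) * (mu \<alpha> l m * mu \<alpha> l (k-m))"
      by (simp only: mult.assoc mult.commute mult.left_commute)
    also have "\<dots> = (\<Sum>r1=0..l. \<Sum>r2=0..l. (real (k choose m) * (-1)^(k-m)) * ((\<alpha> r1 * real r1 ^ m) * (\<alpha> r2 * real r2 ^ (k-m))))"
      unfolding \<open>mu \<alpha> l m * mu \<alpha> l (k-m) = _\<close> by (simp only: sum_distrib_left)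
    also have "\<dots> = (\<Sum>r1=0..l. \<Sum>r2=0..l. real (k choose m) * (\<alpha> r1 * real r1 ^ m) * ((-1)^(k-m) * (\<alpha> r2 * real r2 ^ (k-m))))"
      by (intro sum.cong refl) (simp only: mult.assoc mult.commute mult.left_commute)
    finally show "(\<Sum>r1=0..l. \<Sum>r2=0..l. real (k choose m) * (\<alpha> r1 * real r1 ^ m) * ((-1)^(k-m) * (\<alpha> r2 * real r2 ^ (k-m)))) = real (k choose m) * mu \<alpha> l m * ((-1)^(k-m) * mu \<alpha> l (k-m))"
      by (rule sym)
  qed
  finally show ?thesis .
qed

lemma mu_zero: "is_filter \<alpha> l p \<Longrightarrow> m < p \<Longrightarrow> mu \<alpha> l m = 0"
  unfolding is_filter_def mu_def by auto

lemma mom_zero: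
  assumes "is_filter \<alpha> l p" "k < 2*p"
  shows "mom \<alpha> l k = 0"
proof -
  have "\<And>m. m \<le> k \<Longrightarrow> mu \<alpha> l m * mu \<alpha> l (k-m) = 0"
  proof -
    fix m assume "m \<le> k"
    then have "m < p \<or> k - m < p" using assms(2) by linarith
    then show "mu \<alpha> l m * mu \<alpha> l (k-m) = 0" using mu_zero[OF assms(1)] by auto
  qed
  then show ?thesis unfolding mom_expand
    by (intro sum.neutral) (auto simp: algebra_simps)
qed

lemma mom_2p:
  assumes "is_filter \<alpha> l p"
  shows "mom \<alpha> l (2*p) = real (2*p choose p) * (-1)^p * (mu \<alpha> l p)^2"
proof -
  have "mom \<alpha> l (2*p) = (\<Sum>m\<in>{p}. real (2*p choose m) * mu \<alpha> l m * ((-1)^(2*p-m) * mu \<alpha> l (2*p-m)))"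
    unfolding mom_expand
  proof (rule sum.mono_neutral_right)
    show "\<forall>i\<in>{..2 * p} - {p}. real (2 * p choose i) * mu \<alpha> l i * ((- 1) ^ (2 * p - i) * mu \<alpha> l (2 * p - i)) = 0"
    proof
      fix i assume "i \<in> {..2 * p} - {p}"
      then have "i < p \<or> 2*p - i < p" by auto
      then show "real (2 * p choose i) * mu \<alpha> l i * ((- 1) ^ (2 * p - i) * mu \<alpha> l (2 * p - i)) = 0"
        using mu_zero[OF assms] by auto
    qed
  qed auto
  also have "\<dots> = real (2*p choose p) * (-1)^p * (mu \<alpha> l p)^2"
    by (simp add: mult_2 power2_eq_square)
  finally show ?thesis .
qed

lemma mom_2p_nz:
  assumes "is_filter \<alpha> l p"
  shows "mom \<alpha> l (2*p) \<noteq> 0"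
proof -
  have "mu \<alpha> l p \<noteq> 0" using assms unfolding is_filter_def mu_def by auto
  then show ?thesis unfolding mom_2p[OF assms] by simp
qed



definition ff :: "real \<Rightarrow> nat \<Rightarrow> real" where
  "ff e m = (\<Prod>i<m. e - real i)"

lemma ff_0[simp]: "ff e 0 = 1" by (simp add: ff_def)
lemma ff_Suc: "ff e (Suc m) = ff e m * (e - real m)" by (simp add: ff_def)

lemma deriv_ff:
  assumes "y > 0"
  shows "((\<lambda>y. ff e m * y powr (e - real m)) has_real_derivative ff e (Suc m) * y powr (e - real (Suc m))) (at y)"
proof -
  have "((\<lambda>y. ff e m * y powr (e - real m)) has_real_derivative ff e m * ((e - real m) * y powr (e - real m - 1))) (at y)"
    by (intro DERIV_cmult has_real_derivative_powr assms)
  moreover have "ff e m * ((e - real m) * y powr (e - real m - 1)) = ff e (Suc m) * y powr (e - real (Suc m))"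
    by (simp add: ff_Suc algebra_simps)
  ultimately show ?thesis by simp
qed

lemma powr_interval_bound:
  fixes c t f :: real
  assumes "c > 0" "c/2 \<le> t" "t \<le> 2*c"
  shows "t powr f \<le> 2 powr \<bar>f\<bar> * c powr f"
proof (cases "f \<ge> 0")
  case True
  have "t powr f \<le> (2*c) powr f" using assms True by (intro powr_mono2) auto
  also have "\<dots> = 2 powr \<bar>f\<bar> * c powr f" using True by (simp add: powr_mult)
  finally show ?thesis .
next
  case False
  have "t powr f \<le> (c/2) powr f" using assms False by (intro powr_mono2') auto
  also have "\<dots> = c powr f / 2 powr f" by (rule powr_divide)
  also have "\<dots> = 2 powr (-f) * c powr f" by (simp only: powr_minus divide_inverse mult.commute)
  also have "-f = \<bar>f\<bar>" using False by simp
  finally show ?thesis .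
qed

lemma taylor_powr:
  fixes c d e :: real and n :: nat
  assumes "c > 0" "\<bar>d\<bar> \<le> c/2" "n > 0"
  shows "\<bar>(c+d) powr e - (\<Sum>m<n. ff e m / fact m * c powr (e - real m) * d^m)\<bar>
           \<le> \<bar>ff e n\<bar> / fact n * 2 powr \<bar>e - real n\<bar> * c powr (e - real n) * \<bar>d\<bar>^n"
proof (cases "d = 0")
  case True
  have "(\<Sum>m<n. ff e m / fact m * c powr (e - real m) * d^m) = (\<Sum>m\<in>{0}. ff e m / fact m * c powr (e - real m) * d^m)"
    using True assms(3) by (intro sum.mono_neutral_right) auto
  then show ?thesis using True assms(3) by simp
next
  case False
  define diff where "diff = (\<lambda>m y. ff e m * y powr (e - real m))"
  have "\<exists>t. (if c + d < c then c + d < t \<and> t < c else c < t \<and> t < c + d) \<and>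
    (c + d) powr e = (\<Sum>m<n. (diff m c / fact m) * ((c+d) - c)^m) + (diff n t / fact n) * ((c+d) - c)^n"
  proof (rule Taylor[of n diff "\<lambda>y. y powr e" "c/2" "2*c"])
    show "diff 0 = (\<lambda>y. y powr e)" by (simp add: diff_def)
    show "\<forall>m t. m < n \<and> c / 2 \<le> t \<and> t \<le> 2 * c \<longrightarrow> DERIV (diff m) t :> diff (Suc m) t"
    proof (intro allI impI)
      fix m t assume "m < n \<and> c / 2 \<le> t \<and> t \<le> 2 * c"
      then have "t > 0" using assms(1) by auto
      then show "DERIV (diff m) t :> diff (Suc m) t" unfolding diff_def by (rule deriv_ff)
    qed
  qed (use assms False in auto)
  then obtain t where t: "(if c + d < c then c + d < t \<and> t < c else c < t \<and> t < c + d)"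
    and eq: "(c + d) powr e = (\<Sum>m<n. (diff m c / fact m) * ((c+d) - c)^m) + (diff n t / fact n) * ((c+d) - c)^n"
    by blast
  have tb: "c/2 \<le> t" "t \<le> 2*c" using t assms by (auto split: if_splits)
  have "(c+d) powr e - (\<Sum>m<n. ff e m / fact m * c powr (e - real m) * d^m) = ff e n * t powr (e - real n) / fact n * d^n"
    using eq unfolding diff_def by (simp add: mult_ac)
  then have "\<bar>(c+d) powr e - (\<Sum>m<n. ff e m / fact m * c powr (e - real m) * d^m)\<bar> = \<bar>ff e n\<bar> / fact n * t powr (e - real n) * \<bar>d\<bar>^n"
    by (simp add: abs_mult power_abs)
  also have "\<dots> \<le> \<bar>ff e n\<bar> / fact n * (2 powr \<bar>e - real n\<bar> * c powr (e - real n)) * \<bar>d\<bar>^n"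
    by (intro mult_right_mono mult_left_mono powr_interval_bound assms(1) tb) auto
  finally show ?thesis by (simp add: mult_ac)
qed


definition CPhi :: "real \<Rightarrow> (nat \<Rightarrow> real) \<Rightarrow> nat \<Rightarrow> nat \<Rightarrow> real" where
  "CPhi x \<alpha> l p = (\<Sum>r=0..l. \<bar>\<alpha> r\<bar>)^2 * (\<bar>ff (2*x) (2*p+1)\<bar> / fact (2*p+1) * 2 powr \<bar>2*x - real (2*p+1)\<bar>) * real l^(2*p+1)"

definition KPhi :: "real \<Rightarrow> (nat \<Rightarrow> real) \<Rightarrow> nat \<Rightarrow> nat \<Rightarrow> real" where
  "KPhi x \<alpha> l p = ff (2*x) (2*p) / fact (2*p) * mom \<alpha> l (2*p)"

lemma Phi_expand:
  fixes j :: int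
  assumes filt: "is_filter \<alpha> l p" and J1: "real_of_int j \<ge> 2 * real l" and J2: "real_of_int j \<ge> 1"
  shows "\<bar>Phi x \<alpha> l j - KPhi x \<alpha> l p * real_of_int j powr (2*x - 2*real p)\<bar>
           \<le> CPhi x \<alpha> l p * real_of_int j powr (2*x - 2*real p - 1)"
proof -
  define J where "J = real_of_int j"
  define e where "e = 2*x"
  define n where "n = 2*p+1"
  define cm where "cm = (\<lambda>m. ff e m / fact m * J powr (e - real m))"
  define P where "P = (\<lambda>d::real. \<Sum>m<n. cm m * d^m)"
  define b0 where "b0 = \<bar>ff e n\<bar> / fact n * 2 powr \<bar>e - real n\<bar> * J powr (e - real n)"
  have Jpos: "J > 0" using J2 unfolding J_def by simp
  have dbound: "\<bar>real r1 - real r2\<bar> \<le> real l" if "r1 \<in> {0..l}" "r2 \<in> {0..l}" for r1 r2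
    using that by auto
  have T: "\<bar>(J + (real r1 - real r2)) powr e - P (real r1 - real r2)\<bar> \<le> b0 * real l ^ n"
    if "r1 \<in> {0..l}" "r2 \<in> {0..l}" for r1 r2
  proof -
    have "\<bar>(J + (real r1 - real r2)) powr e - P (real r1 - real r2)\<bar> \<le> b0 * \<bar>real r1 - real r2\<bar> ^ n"
      unfolding P_def cm_def b0_def using taylor_powr[of J "real r1 - real r2" n e] Jpos dbound[OF that] J1
      unfolding J_def n_def by (simp add: mult_ac)
    also have "\<dots> \<le> b0 * real l ^ n"
      unfolding b0_def by (intro mult_left_mono power_mono dbound that) auto
    finally show ?thesis .
  qed
  have PhiJ: "Phi x \<alpha> l j = (\<Sum>r1=0..l. \<Sum>r2=0..l. \<alpha> r1 * \<alpha> r2 * (J + (real r1 - real r2)) powr e)"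
    unfolding Phi_def J_def e_def
  proof (intro sum.cong refl)
    fix r1 r2 assume "r1 \<in> {0..l}" "r2 \<in> {0..l}"
    then have "real_of_int j + real r1 - real r2 \<ge> 0" using J1 by auto
    then show "\<alpha> r1 * \<alpha> r2 * \<bar>real_of_int j + real r1 - real r2\<bar> powr (2 * x) =
         \<alpha> r1 * \<alpha> r2 * (real_of_int j + (real r1 - real r2)) powr (2 * x)" by (simp add: add_diff_eq)
  qed
  have Psum: "(\<Sum>r1=0..l. \<Sum>r2=0..l. \<alpha> r1 * \<alpha> r2 * P (real r1 - real r2)) = (\<Sum>m<n. cm m * mom \<alpha> l m)"
  proof -
    have "(\<Sum>r1=0..l. \<Sum>r2=0..l. \<alpha> r1 * \<alpha> r2 * P (real r1 - real r2))
        = (\<Sum>r1=0..l. \<Sum>r2=0..l. \<Sum>m<n. cm m * (\<alpha> r1 * \<alpha> r2 * (real r1 - real r2)^m))"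
      unfolding P_def sum_distrib_left by (intro sum.cong refl) (simp only: mult_ac)
    also have "\<dots> = (\<Sum>r1=0..l. \<Sum>m<n. \<Sum>r2=0..l. cm m * (\<alpha> r1 * \<alpha> r2 * (real r1 - real r2)^m))"
      by (rule sum.cong[OF refl]) (rule sum.swap)
    also have "\<dots> = (\<Sum>m<n. \<Sum>r1=0..l. \<Sum>r2=0..l. cm m * (\<alpha> r1 * \<alpha> r2 * (real r1 - real r2)^m))"
      by (rule sum.swap)
    also have "\<dots> = (\<Sum>m<n. cm m * mom \<alpha> l m)"
      unfolding mom_def sum_distrib_left by (rule refl)
    finally show ?thesis .
  qed
  have Psum2: "(\<Sum>m<n. cm m * mom \<alpha> l m) = KPhi x \<alpha> l p * J powr (2*x - 2*real p)"
  proof -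
    have "(\<Sum>m<n. cm m * mom \<alpha> l m) = (\<Sum>m<2*p. cm m * mom \<alpha> l m) + cm (2*p) * mom \<alpha> l (2*p)"
      unfolding n_def by simp
    also have "(\<Sum>m<2*p. cm m * mom \<alpha> l m) = 0"
      by (intro sum.neutral) (simp add: mom_zero[OF filt])
    finally show ?thesis unfolding cm_def KPhi_def e_def by simp
  qed
  have "Phi x \<alpha> l j - KPhi x \<alpha> l p * J powr (2*x - 2*real p)
      = (\<Sum>r1=0..l. \<Sum>r2=0..l. \<alpha> r1 * \<alpha> r2 * ((J + (real r1 - real r2)) powr e - P (real r1 - real r2)))"
    unfolding PhiJ Psum2[symmetric] Psum[symmetric]
    by (simp only: sum_subtractf right_diff_distrib)
  also have "\<bar>\<dots>\<bar> \<le> (\<Sum>r1=0..l. \<Sum>r2=0..l. \<bar>\<alpha> r1\<bar> * \<bar>\<alpha> r2\<bar> * (b0 * real l ^ n))"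
  proof -
    have "\<bar>(\<Sum>r1=0..l. \<Sum>r2=0..l. \<alpha> r1 * \<alpha> r2 * ((J + (real r1 - real r2)) powr e - P (real r1 - real r2)))\<bar>
       \<le> (\<Sum>r1=0..l. \<bar>\<Sum>r2=0..l. \<alpha> r1 * \<alpha> r2 * ((J + (real r1 - real r2)) powr e - P (real r1 - real r2))\<bar>)"
      by (rule sum_abs)
    also have "\<dots> \<le> (\<Sum>r1=0..l. \<Sum>r2=0..l. \<bar>\<alpha> r1 * \<alpha> r2 * ((J + (real r1 - real r2)) powr e - P (real r1 - real r2))\<bar>)"
      by (intro sum_mono sum_abs)
    also have "\<dots> \<le> (\<Sum>r1=0..l. \<Sum>r2=0..l. \<bar>\<alpha> r1\<bar> * \<bar>\<alpha> r2\<bar> * (b0 * real l ^ n))"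
      by (intro sum_mono) (auto simp only: abs_mult intro!: mult_left_mono T mult_nonneg_nonneg abs_ge_zero)
    finally show ?thesis .
  qed
  also have "\<dots> = (\<Sum>r=0..l. \<bar>\<alpha> r\<bar>)^2 * (b0 * real l ^ n)"
    unfolding power2_eq_square sum_product by (simp only: sum_distrib_right)
  also have "\<dots> = CPhi x \<alpha> l p * J powr (2*x - 2*real p - 1)"
  proof -
    have "e - real n = 2*x - 2*real p - 1" unfolding e_def n_def by simp
    then have "J powr (e - real n) = J powr (2*x - 2*real p - 1)" by simp
    then show ?thesis unfolding CPhi_def b0_def by (simp add: n_def e_def mult_ac)
  qed
  finally show ?thesis unfolding J_def .
qed



lemma gauss_pd:
  fixes c x :: "'i \<Rightarrow> real"
  assumes "finite I" "s \<ge> 0"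
  shows "0 \<le> (\<Sum>i\<in>I. \<Sum>j\<in>I. c i * c j * exp (- s * (x i - x j)^2))"
proof -
  define u where "u i = c i * exp (- s * (x i)^2)" for i
  have eq: "c i * c j * exp (- s * (x i - x j)^2) = u i * u j * exp (2 * s * x i * x j)" for i j
  proof -
    have "exp (- s * (x i - x j)^2) = exp ((- s * (x i)^2) + (- s * (x j)^2) + 2 * s * x i * x j)"
      by (rule arg_cong[where f=exp]) (simp add: power2_eq_square algebra_simps)
    also have "\<dots> = exp (- s * (x i)^2) * exp (- s * (x j)^2) * exp (2 * s * x i * x j)"
      by (simp only: exp_add)
    finally have "exp (- s * (x i - x j)^2) = exp (- s * (x i)^2) * exp (- s * (x j)^2) * exp (2 * s * x i * x j)" .
    then show ?thesis unfolding u_def by (simp add: mult_ac)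
  qed
  have ser: "(\<lambda>k. u i * u j * ((2 * s * x i * x j)^k / fact k)) sums (u i * u j * exp (2 * s * x i * x j))" for i j
    using sums_mult[OF exp_converges[of "2 * s * x i * x j"], of "u i * u j"]
    by (simp add: divide_inverse scaleR_conv_of_real mult.commute)
  have "(\<lambda>k. \<Sum>i\<in>I. \<Sum>j\<in>I. u i * u j * ((2 * s * x i * x j)^k / fact k)) sums (\<Sum>i\<in>I. \<Sum>j\<in>I. u i * u j * exp (2 * s * x i * x j))"
    by (intro sums_sum ser)
  moreover have "(\<Sum>i\<in>I. \<Sum>j\<in>I. u i * u j * ((2 * s * x i * x j)^k / fact k)) = (2 * s)^k / fact k * (\<Sum>i\<in>I. u i * x i ^ k)^2" for k
  proof -
    have "(\<Sum>i\<in>I. u i * x i ^ k)^2 = (\<Sum>i\<in>I. \<Sum>j\<in>I. (u i * x i ^ k) * (u j * x j ^ k))"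
      unfolding power2_eq_square by (rule sum_product)
    moreover have "u i * u j * ((2 * s * x i * x j)^k / fact k) = (2 * s)^k / fact k * ((u i * x i ^ k) * (u j * x j ^ k))" for i j
      by (simp add: power_mult_distrib)
    ultimately show ?thesis
      by (simp only: sum_distrib_left)
  qed
  ultimately have S: "(\<lambda>k. (2 * s)^k / fact k * (\<Sum>i\<in>I. u i * x i ^ k)^2) sums (\<Sum>i\<in>I. \<Sum>j\<in>I. u i * u j * exp (2 * s * x i * x j))"
    by simp
  have "0 \<le> (\<Sum>i\<in>I. \<Sum>j\<in>I. u i * u j * exp (2 * s * x i * x j))"
    by (rule sums_le[OF _ sums_zero S]) (use assms in simp)
  then show ?thesis unfolding eq .
qed

definition dbin :: "real \<Rightarrow> nat \<Rightarrow> real" where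
  "dbin H k = (H gchoose k) * (-1)^k"

lemma dbin_Suc: "dbin H (Suc k) = (real k - H) / real (Suc k) * dbin H k"
proof -
  have "H * (H gchoose k) = of_nat k * (H gchoose k) + of_nat (Suc k) * (H gchoose (Suc k))"
    by (rule gbinomial_mult_1)
  then have e: "real (Suc k) * (H gchoose (Suc k)) = (H - real k) * (H gchoose k)"
    by (simp add: algebra_simps)
  have "real (Suc k) * dbin H (Suc k) = real (Suc k) * (H gchoose (Suc k)) * (-1)^(Suc k)"
    unfolding dbin_def by (simp only: mult.assoc)
  also have "\<dots> = (real k - H) * dbin H k" unfolding e dbin_def by (simp add: algebra_simps)
  finally have "real (Suc k) * dbin H (Suc k) = (real k - H) * dbin H k" .
  then show ?thesis by (simp add: field_simps del: of_nat_Suc)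
qed

lemma dbin_nonpos:
  assumes "0 < H" "H < 1" "k \<ge> 1"
  shows "dbin H k \<le> 0"
  using assms(3)
proof (induction k rule: dec_induct)
  case base
  then show ?case using assms unfolding dbin_def by simp
next
  case (step k)
  have "(real k - H) / real (Suc k) \<ge> 0" using step assms by auto
  then show ?case unfolding dbin_Suc using step mult_nonneg_nonpos by blast
qed

lemma dbin_series:
  assumes "\<bar>z\<bar> < 1"
  shows "(\<lambda>k. dbin H k * z^k) sums ((1 - z) powr H)"
proof -
  have "\<bar>-z\<bar> < 1" using assms by simp
  have e: "(\<lambda>k. dbin H k * z^k) = (\<lambda>n. (H gchoose n) * (-z)^n)"
    by (rule ext) (simp only: dbin_def power_minus[of z] mult_ac)
  have "1 + - z = 1 - z" by simp
  with gen_binomial_real[OF \<open>\<bar>-z\<bar> < 1\<close>, of H] show ?thesis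
    unfolding e by simp
qed

lemma cnd_theta:
  fixes c x :: "'i \<Rightarrow> real"
  assumes "finite I" "sum c I = 0" "s > 0" "0 < \<theta>" "\<theta> < 1" "0 < H" "H < 1"
  shows "(\<Sum>i\<in>I. \<Sum>j\<in>I. c i * c j * (1 - \<theta> * exp (- s * (x i - x j)^2)) powr H) \<le> 0"
proof -
  define G where "G i j = exp (- s * (x i - x j)^2)" for i j
  have G1: "\<bar>\<theta> * G i j\<bar> < 1" for i j
  proof -
    have "G i j \<le> 1" unfolding G_def using assms(3) by (simp add: mult_nonneg_nonneg)
    moreover have "G i j > 0" unfolding G_def by simp
    moreover have "\<theta> * G i j \<le> \<theta> * 1" using \<open>G i j \<le> 1\<close> assms(4) by (intro mult_left_mono) auto
    moreover have "\<theta> * G i j > 0" using \<open>G i j > 0\<close> assms(4) by simp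
    ultimately show ?thesis using assms(5) by linarith
  qed
  have S: "(\<lambda>k. \<Sum>i\<in>I. \<Sum>j\<in>I. c i * c j * (dbin H k * (\<theta> * G i j)^k)) sums
        (\<Sum>i\<in>I. \<Sum>j\<in>I. c i * c j * (1 - \<theta> * G i j) powr H)"
    by (intro sums_sum sums_mult dbin_series G1)
  have T: "(\<Sum>i\<in>I. \<Sum>j\<in>I. c i * c j * (dbin H k * (\<theta> * G i j)^k)) \<le> 0" for k
  proof (cases "k = 0")
    case True
    have "(\<Sum>i\<in>I. \<Sum>j\<in>I. c i * c j * (dbin H k * (\<theta> * G i j)^k)) = (\<Sum>i\<in>I. \<Sum>j\<in>I. c i * c j)"
      using True by (simp add: dbin_def)
    also have "\<dots> = sum c I * sum c I" by (rule sum_product[symmetric])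
    finally show ?thesis using assms(2) by simp
  next
    case False
    have "G i j ^ k = exp (- (real k * s) * (x i - x j)^2)" for i j
    proof -
      have "G i j ^ k = exp (real k * (- s * (x i - x j)^2))" unfolding G_def by (rule exp_of_nat_mult[symmetric])
      also have "real k * (- s * (x i - x j)^2) = - (real k * s) * (x i - x j)^2" by simp
      finally show ?thesis .
    qed
    then have "c i * c j * (dbin H k * (\<theta> * G i j)^k) = dbin H k * \<theta>^k * (c i * c j * exp (- (real k * s) * (x i - x j)^2))" for i j
      by (simp only: power_mult_distrib mult_ac)
    then have "(\<Sum>i\<in>I. \<Sum>j\<in>I. c i * c j * (dbin H k * (\<theta> * G i j)^k))
        = dbin H k * \<theta>^k * (\<Sum>i\<in>I. \<Sum>j\<in>I. c i * c j * exp (- (real k * s) * (x i - x j)^2))"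
      by (simp only: sum_distrib_left)
    moreover have "0 \<le> (\<Sum>i\<in>I. \<Sum>j\<in>I. c i * c j * exp (- (real k * s) * (x i - x j)^2))"
      using assms(1,3) by (intro gauss_pd) auto
    moreover have "dbin H k \<le> 0" using False assms by (intro dbin_nonpos) auto
    moreover have "\<theta>^k \<ge> 0" using assms by simp
    ultimately show ?thesis by (simp add: mult_nonpos_nonneg)
  qed
  have "(\<Sum>i\<in>I. \<Sum>j\<in>I. c i * c j * (1 - \<theta> * G i j) powr H) \<le> 0"
    using sums_le[OF T S sums_zero] .
  then show ?thesis unfolding G_def .
qed



lemma cnd_s:
  fixes c x :: "'i \<Rightarrow> real"
  assumes "finite I" "sum c I = 0" "s > 0" "0 < H" "H < 1"
  shows "(\<Sum>i\<in>I. \<Sum>j\<in>I. c i * c j * (1 - exp (- s * (x i - x j)^2)) powr H) \<le> 0"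
proof -
  define th where "th m = 1 - 1 / real (m + 2)" for m :: nat
  have th_lim: "th \<longlonglongrightarrow> 1" unfolding th_def by real_asymp
  have th_pos: "0 < th m" "th m < 1" for m unfolding th_def by (auto simp: field_simps)
  define G where "G i j = exp (- s * (x i - x j)^2)" for i j
  have G1: "G i j \<le> 1" "G i j > 0" for i j unfolding G_def using assms(3) by (auto simp: mult_nonneg_nonneg)
  have "(\<lambda>m. \<Sum>i\<in>I. \<Sum>j\<in>I. c i * c j * (1 - th m * G i j) powr H) \<longlonglongrightarrow> (\<Sum>i\<in>I. \<Sum>j\<in>I. c i * c j * (1 - 1 * G i j) powr H)"
  proof (intro tendsto_sum tendsto_mult_left tendsto_powr' tendsto_diff tendsto_mult_right tendsto_const th_lim disjI2 conjI)
    fix i j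
    show "0 < H" by fact
    show "\<forall>\<^sub>F m in sequentially. 0 \<le> 1 - th m * G i j"
    proof (intro always_eventually allI)
      fix m
      have "th m * G i j \<le> 1 * 1" using th_pos[of m] G1[of i j] by (intro mult_mono) auto
      then show "0 \<le> 1 - th m * G i j" by simp
    qed
  qed
  moreover have "\<forall>m\<ge>0. (\<Sum>i\<in>I. \<Sum>j\<in>I. c i * c j * (1 - th m * G i j) powr H) \<le> 0"
    unfolding G_def using assms th_pos by (intro allI impI cnd_theta) auto
  ultimately have "(\<Sum>i\<in>I. \<Sum>j\<in>I. c i * c j * (1 - 1 * G i j) powr H) \<le> 0"
    by (intro LIMSEQ_le_const2) blast+
  then show ?thesis unfolding G_def by simp
qed

lemma lim_exp_aux:
  fixes d :: real
  assumes "d \<ge> 0"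
  shows "(\<lambda>m. real (Suc m) * (1 - exp (- (1 / real (Suc m)) * d))) \<longlonglongrightarrow> d"
proof (cases "d = 0")
  case True then show ?thesis by simp
next
  case False
  with assms have "d > 0" by simp
  then show ?thesis by real_asymp
qed

lemma cnd:
  fixes c x :: "'i \<Rightarrow> real"
  assumes "finite I" "sum c I = 0" "0 < H" "H < 1"
  shows "(\<Sum>i\<in>I. \<Sum>j\<in>I. c i * c j * \<bar>x i - x j\<bar> powr (2*H)) \<le> 0"
proof -
  define F where "F m i j = real (Suc m) * (1 - exp (- (1 / real (Suc m)) * (x i - x j)^2))" for m i j
  have Fnn: "F m i j \<ge> 0" for m i j
    unfolding F_def by (intro mult_nonneg_nonneg) (auto simp: mult_nonneg_nonneg)
  have lim: "(\<lambda>m. \<Sum>i\<in>I. \<Sum>j\<in>I. c i * c j * F m i j powr H) \<longlonglongrightarrow> (\<Sum>i\<in>I. \<Sum>j\<in>I. c i * c j * ((x i - x j)^2) powr H)"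
  proof (intro tendsto_sum tendsto_mult_left tendsto_powr' tendsto_const disjI2 conjI)
    fix i j
    show "0 < H" by fact
    show "(\<lambda>m. F m i j) \<longlonglongrightarrow> (x i - x j)^2" unfolding F_def by (rule lim_exp_aux) simp
    show "\<forall>\<^sub>F m in sequentially. 0 \<le> F m i j" using Fnn by simp
  qed
  have le: "(\<Sum>i\<in>I. \<Sum>j\<in>I. c i * c j * F m i j powr H) \<le> 0" for m
  proof -
    have "F m i j powr H = real (Suc m) powr H * (1 - exp (- (1 / real (Suc m)) * (x i - x j)^2)) powr H" for i j
      unfolding F_def by (rule powr_mult)
    then have "(\<Sum>i\<in>I. \<Sum>j\<in>I. c i * c j * F m i j powr H) = real (Suc m) powr H * (\<Sum>i\<in>I. \<Sum>j\<in>I. c i * c j * (1 - exp (- (1 / real (Suc m)) * (x i - x j)^2)) powr H)"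
      by (simp add: sum_distrib_left mult_ac)
    moreover have "(\<Sum>i\<in>I. \<Sum>j\<in>I. c i * c j * (1 - exp (- (1 / real (Suc m)) * (x i - x j)^2)) powr H) \<le> 0"
      using assms by (intro cnd_s) auto
    ultimately show ?thesis by (simp add: mult_nonneg_nonpos)
  qed
  have "(\<Sum>i\<in>I. \<Sum>j\<in>I. c i * c j * ((x i - x j)^2) powr H) \<le> 0"
    using lim le by (intro LIMSEQ_le_const2) blast+
  moreover have "((x i - x j)^2) powr H = \<bar>x i - x j\<bar> powr (2*H)" for i j
  proof -
    have e: "(x i - x j)^2 = \<bar>x i - x j\<bar> powr 2" by simp
    have "((x i - x j)^2) powr H = (\<bar>x i - x j\<bar> powr 2) powr H" by (simp only: e)
    also have "\<dots> = \<bar>x i - x j\<bar> powr (2*H)" by (rule powr_powr)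
    finally show ?thesis .
  qed
  ultimately show ?thesis by simp
qed



lemma Phi_even: "Phi x \<alpha> l (-v) = Phi x \<alpha> l v"
proof -
  have "Phi x \<alpha> l (-v) = (\<Sum>r2=0..l. \<Sum>r1=0..l. \<alpha> r1 * \<alpha> r2 * \<bar>real_of_int (-v) + real r1 - real r2\<bar> powr (2 * x))"
    unfolding Phi_def by (rule sum.swap)
  also have "\<dots> = Phi x \<alpha> l v"
    unfolding Phi_def
  proof (intro sum.cong refl)
    fix r1 r2
    have e: "\<bar>real_of_int (-v) + real r2 - real r1\<bar> = \<bar>real_of_int v + real r1 - real r2\<bar>"
      by (simp add: abs_minus_commute algebra_simps)
    show "\<alpha> r2 * \<alpha> r1 * \<bar>real_of_int (-v) + real r2 - real r1\<bar> powr (2 * x) =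
               \<alpha> r1 * \<alpha> r2 * \<bar>real_of_int v + real r1 - real r2\<bar> powr (2 * x)"
      unfolding e by (simp add: mult.commute)
  qed
  finally show ?thesis .
qed

lemma sum_prod_bool: "(\<Sum>z\<in>A \<times> (UNIV::bool set). f z) = (\<Sum>r\<in>A. f (r,True) + f (r,False))"
proof -
  have "(\<Sum>z\<in>A \<times> (UNIV::bool set). f z) = (\<Sum>r\<in>A. \<Sum>b\<in>(UNIV::bool set). f (r,b))"
    by (simp add: sum.cartesian_product)
  also have "\<dots> = (\<Sum>r\<in>A. f (r,True) + f (r,False))"
    by (simp add: UNIV_bool add.commute)
  finally show ?thesis .
qed

lemma filt_sum0: "is_filter \<alpha> l p \<Longrightarrow> p \<ge> 1 \<Longrightarrow> (\<Sum>q=0..l. \<alpha> q) = 0"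
  unfolding is_filter_def by (drule conjunct1) (drule spec[of _ 0], simp)

lemma Phi_quad:
  assumes filt: "is_filter \<alpha> l p" "p \<ge> 1" and H: "0 < H" "H < 1"
  shows "(1 + s^2) * Phi H \<alpha> l 0 + 2 * s * Phi H \<alpha> l v \<le> 0"
proof -
  define I where "I = {0..l} \<times> (UNIV::bool set)"
  define xx where "xx z = real (fst z) + (if snd z then real_of_int v else 0)" for z :: "nat \<times> bool"
  define cc where "cc z = \<alpha> (fst z) * (if snd z then s else 1)" for z :: "nat \<times> bool"
  have fin: "finite I" unfolding I_def by simp
  have "sum cc I = (\<Sum>r=0..l. \<alpha> r * s + \<alpha> r)" unfolding I_def sum_prod_bool cc_def by simp
  also have "\<dots> = (s + 1) * (\<Sum>r=0..l. \<alpha> r)" by (simp add: sum.distrib sum_distrib_left sum_distrib_right algebra_simps)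
  also have "\<dots> = 0" using filt_sum0[OF filt] by simp
  finally have s0: "sum cc I = 0" .
  define E where "E w = \<bar>w\<bar> powr (2*H)" for w :: real
  have "(\<Sum>i\<in>I. \<Sum>j\<in>I. cc i * cc j * \<bar>xx i - xx j\<bar> powr (2*H)) \<le> 0"
    by (rule cnd[OF fin s0 H])
  also have "(\<Sum>i\<in>I. \<Sum>j\<in>I. cc i * cc j * \<bar>xx i - xx j\<bar> powr (2*H)) =
     (\<Sum>r1=0..l. \<Sum>r2=0..l. (1 + s^2) * (\<alpha> r1 * \<alpha> r2 * E (real_of_int 0 + real r1 - real r2))
        + s * (\<alpha> r1 * \<alpha> r2 * E (real_of_int v + real r1 - real r2))
        + s * (\<alpha> r1 * \<alpha> r2 * E (real_of_int (-v) + real r1 - real r2)))"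
    unfolding I_def sum_prod_bool sum.distrib[symmetric]
  proof (intro sum.cong refl)
    fix r1 r2
    have e1: "\<bar>real r1 + real_of_int v - (real r2 + real_of_int v)\<bar> = \<bar>real_of_int 0 + real r1 - real r2\<bar>" by simp
    have e2: "\<bar>real r1 + real_of_int v - real r2\<bar> = \<bar>real_of_int v + real r1 - real r2\<bar>" by simp
    have e3: "\<bar>real r1 - (real r2 + real_of_int v)\<bar> = \<bar>real_of_int (-v) + real r1 - real r2\<bar>" by simp
    have e4: "\<bar>real r1 - real r2\<bar> = \<bar>real_of_int 0 + real r1 - real r2\<bar>" by simp
    show "cc (r1, True) * cc (r2, True) * \<bar>xx (r1, True) - xx (r2, True)\<bar> powr (2 * H) +
          cc (r1, True) * cc (r2, False) * \<bar>xx (r1, True) - xx (r2, False)\<bar> powr (2 * H) +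
         (cc (r1, False) * cc (r2, True) * \<bar>xx (r1, False) - xx (r2, True)\<bar> powr (2 * H) +
          cc (r1, False) * cc (r2, False) * \<bar>xx (r1, False) - xx (r2, False)\<bar> powr (2 * H)) =
         (1 + s\<^sup>2) * (\<alpha> r1 * \<alpha> r2 * E (real_of_int 0 + real r1 - real r2)) +
         s * (\<alpha> r1 * \<alpha> r2 * E (real_of_int v + real r1 - real r2)) +
         s * (\<alpha> r1 * \<alpha> r2 * E (real_of_int (- v) + real r1 - real r2))"
      unfolding cc_def xx_def E_def fst_conv snd_conv if_True if_False e1[symmetric] e2[symmetric] e3[symmetric] e4[symmetric]
      by (simp add: algebra_simps power2_eq_square)
  qed
  also have "\<dots> = (1 + s^2) * Phi H \<alpha> l 0 + s * Phi H \<alpha> l v + s * Phi H \<alpha> l (-v)"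
    unfolding Phi_def E_def by (simp add: sum.distrib sum_distrib_left)
  also have "\<dots> = (1 + s^2) * Phi H \<alpha> l 0 + 2 * s * Phi H \<alpha> l v"
    unfolding Phi_even by simp
  finally show ?thesis .
qed

lemma Phi0_nonpos:
  assumes "is_filter \<alpha> l p" "p \<ge> 1" "0 < H" "H < 1"
  shows "Phi H \<alpha> l 0 \<le> 0"
  using Phi_quad[OF assms, of 0 0] by simp

lemma Phi_abs_le:
  assumes "is_filter \<alpha> l p" "p \<ge> 1" "0 < H" "H < 1"
  shows "\<bar>Phi H \<alpha> l v\<bar> \<le> - Phi H \<alpha> l 0"
  using Phi_quad[OF assms, of 1 v] Phi_quad[OF assms, of "-1" v] by simp



lemma ff_nz:
  assumes "1/2 < H" "H < 1"
  shows "ff (2*H) m \<noteq> 0"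
proof
  assume "ff (2*H) m = 0"
  then obtain i where "i < m" "2*H - real i = 0" unfolding ff_def by auto
  then have "2*H = real i" by simp
  then have "real i > 1" "real i < 2" using assms by linarith+
  then have "i > 1" "i < 2" by simp_all
  then show False by simp
qed

lemma KPhi_nz:
  assumes "is_filter \<alpha> l p" "1/2 < H" "H < 1"
  shows "KPhi H \<alpha> l p \<noteq> 0"
  unfolding KPhi_def using ff_nz[OF assms(2,3)] mom_2p_nz[OF assms(1)] by simp

lemma CPhi_nonneg: "CPhi x \<alpha> l p \<ge> 0"
  unfolding CPhi_def by (intro mult_nonneg_nonneg) auto

lemma Phi_expand_nat:
  fixes v :: nat
  assumes "is_filter \<alpha> l p" "v \<ge> 2*l" "v \<ge> 1"
  shows "\<bar>Phi x \<alpha> l (int v) - KPhi x \<alpha> l p * real v powr (2*x - 2*real p)\<bar>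
           \<le> CPhi x \<alpha> l p * real v powr (2*x - 2*real p - 1)"
  using Phi_expand[OF assms(1), of "int v" x] assms by simp

lemma Phi_exists_nz:
  assumes "is_filter \<alpha> l p" "1/2 < H" "H < 1"
  shows "\<exists>j. Phi H \<alpha> l j \<noteq> 0"
proof (rule ccontr)
  assume "\<not> (\<exists>j. Phi H \<alpha> l j \<noteq> 0)"
  then have z: "Phi H \<alpha> l j = 0" for j by simp
  define K where "K = KPhi H \<alpha> l p"
  define C where "C = CPhi H \<alpha> l p"
  define e where "e = 2*H - 2*real p"
  have K: "K \<noteq> 0" unfolding K_def by (rule KPhi_nz[OF assms])
  define v where "v = 2*l + 1 + nat \<lceil>C / \<bar>K\<bar>\<rceil>"
  have v1: "v \<ge> 2*l" "v \<ge> 1" unfolding v_def by auto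
  have vC: "real v > C / \<bar>K\<bar>" unfolding v_def by linarith
  have "\<bar>0 - K * real v powr e\<bar> \<le> C * real v powr (e - 1)"
    using Phi_expand_nat[OF assms(1) v1, of H] unfolding z K_def C_def e_def by simp
  then have "\<bar>K\<bar> * (real v powr (e - 1) * real v) \<le> C * real v powr (e - 1)"
  proof -
    have "real v powr e = real v powr ((e - 1) + 1)" by simp
    also have "\<dots> = real v powr (e - 1) * real v powr 1" by (rule powr_add)
    also have "\<dots> = real v powr (e - 1) * real v" using v1 by simp
    finally show ?thesis using \<open>\<bar>0 - K * real v powr e\<bar> \<le> _\<close> by (simp add: abs_mult)
  qed
  moreover have "real v powr (e - 1) > 0" using v1 by simp
  ultimately have "\<bar>K\<bar> * real v \<le> C" by (simp add: mult_ac)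
  moreover have "\<bar>K\<bar> * real v > C" using vC K by (simp add: field_simps)
  ultimately show False by simp
qed

lemma A0_neg:
  assumes "is_filter \<alpha> l p" "p \<ge> 1" "1/2 < H" "H < 1"
  shows "Phi H \<alpha> l 0 < 0"
proof -
  have H0: "0 < H" using assms by simp
  obtain j where j: "Phi H \<alpha> l j \<noteq> 0" using Phi_exists_nz[OF assms(1,3,4)] by blast
  have "\<bar>Phi H \<alpha> l j\<bar> \<le> - Phi H \<alpha> l 0" by (rule Phi_abs_le[OF assms(1,2) H0 assms(4)])
  with j have "Phi H \<alpha> l 0 \<noteq> 0" by auto
  with Phi0_nonpos[OF assms(1,2) H0 assms(4)] show ?thesis by simp
qed

lemma global_bound:
  fixes g :: "nat \<Rightarrow> real"
  assumes "\<And>v. v \<ge> V0 \<Longrightarrow> \<bar>g v\<bar> \<le> C * real v powr f"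
  shows "\<exists>C'. \<forall>v\<ge>1. \<bar>g v\<bar> \<le> C' * real v powr f"
proof -
  define M where "M = (\<Sum>v<V0. \<bar>g v\<bar>)"
  define m0 where "m0 = min 1 (real V0 powr f)"
  define C' where "C' = max (max C 0) (M / m0)"
  have M0: "M \<ge> 0" unfolding M_def by (intro sum_nonneg) auto
  show ?thesis
  proof (intro exI allI impI)
    fix v :: nat assume v: "v \<ge> 1"
    show "\<bar>g v\<bar> \<le> C' * real v powr f"
    proof (cases "v \<ge> V0")
      case True
      have "\<bar>g v\<bar> \<le> C * real v powr f" using assms True by blast
      also have "\<dots> \<le> C' * real v powr f" unfolding C'_def by (intro mult_right_mono) auto
      finally show ?thesis .
    next
      case False
      have m0pos: "m0 > 0" unfolding m0_def using False v by simp
      have vm: "real v powr f \<ge> m0"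
      proof (cases "f \<ge> 0")
        case True
        have "1 powr f \<le> real v powr f" using True v by (intro powr_mono2) auto
        then show ?thesis unfolding m0_def by simp
      next
        case False
        have "real V0 powr f \<le> real v powr f" using False v \<open>\<not> v \<ge> V0\<close> by (intro powr_mono2') auto
        then show ?thesis unfolding m0_def by simp
      qed
      have "\<bar>g v\<bar> \<le> M" unfolding M_def using False
        by (intro member_le_sum) auto
      also have "\<dots> = (M / m0) * m0" using m0pos by simp
      also have "\<dots> \<le> (M / m0) * real v powr f" using vm M0 m0pos by (intro mult_left_mono) auto
      also have "\<dots> \<le> C' * real v powr f" unfolding C'_def by (intro mult_right_mono) auto
      finally show ?thesis .
    qed
  qed
qed

lemma Phi_bound:
  assumes "is_filter \<alpha> l p"
  shows "\<exists>C. \<forall>v\<ge>1. \<bar>Phi x \<alpha> l (int v)\<bar> \<le> C * real v powr (2*x - 2*real p)"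
proof (rule global_bound)
  fix v :: nat assume v: "v \<ge> 2*l + 1"
  have "\<bar>Phi x \<alpha> l (int v)\<bar> \<le> \<bar>KPhi x \<alpha> l p\<bar> * real v powr (2*x - 2*real p) + CPhi x \<alpha> l p * real v powr (2*x - 2*real p - 1)"
  proof -
    have h1: "\<bar>Phi x \<alpha> l (int v) - KPhi x \<alpha> l p * real v powr (2*x - 2*real p)\<bar> \<le> CPhi x \<alpha> l p * real v powr (2*x - 2*real p - 1)"
      using Phi_expand_nat[OF assms, of v x] v by simp
    have h2: "\<bar>KPhi x \<alpha> l p * real v powr (2*x - 2*real p)\<bar> = \<bar>KPhi x \<alpha> l p\<bar> * real v powr (2*x - 2*real p)"
      by (simp add: abs_mult)
    show ?thesis using h1 h2 by linarith
  qed
  also have "\<dots> \<le> \<bar>KPhi x \<alpha> l p\<bar> * real v powr (2*x - 2*real p) + CPhi x \<alpha> l p * real v powr (2*x - 2*real p)"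
    using v CPhi_nonneg by (intro add_left_mono mult_left_mono powr_mono) auto
  finally show "\<bar>Phi x \<alpha> l (int v)\<bar> \<le> (\<bar>KPhi x \<alpha> l p\<bar> + CPhi x \<alpha> l p) * real v powr (2*x - 2*real p)"
    by (simp add: algebra_simps)
qed



definition kap :: "real \<Rightarrow> real \<Rightarrow> real" where
  "kap t H = ((4 * H - 1) / (8 * (2 * H + 1))) / (- t / 4)"

definition EE :: "real \<Rightarrow> real \<Rightarrow> (nat \<Rightarrow> real) \<Rightarrow> nat \<Rightarrow> nat \<Rightarrow> int \<Rightarrow> real" where
  "EE t H \<alpha> l N j = Phi H \<alpha> l j + kap t H * Phi (H + 1/2) \<alpha> l j / real N"

lemma piN_eq:
  assumes "t > 0" "N \<ge> 1" "H > 0"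
  shows "piN t H \<alpha> l N j = (- t / 4) * real N powr (- 2 * H) * EE t H \<alpha> l N j"
proof -
  have "real N powr (- 2 * H - 1) = real N powr (- 2 * H) / real N powr 1" by (rule powr_diff)
  also have "\<dots> = real N powr (- 2 * H) / real N" using assms by simp
  finally have e: "real N powr (- 2 * H - 1) = real N powr (- 2 * H) / real N" .
  have tt: "-t/4 \<noteq> 0" using assms by simp
  have cc: "c * (X / c) = X" if "c \<noteq> 0" for c X :: real using that by simp
  have k: "(4*H-1)/(8*(2*H+1)) = (-t/4) * kap t H" unfolding kap_def by (rule cc[OF tt, symmetric])
  show ?thesis unfolding piN_def EE_def e k by (simp add: algebra_simps)
qed

lemma rhoN_eq:
  assumes "t > 0" "N \<ge> 1" "H > 0"
  shows "rhoN t H \<alpha> l N j = EE t H \<alpha> l N j / EE t H \<alpha> l N 0"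
proof -
  have c: "(- t / 4) * real N powr (- 2 * H) \<noteq> 0" using assms by simp
  show ?thesis unfolding rhoN_def piN_eq[OF assms] using c
    by (simp only: mult_divide_mult_cancel_left_if if_False)
qed

lemma EE_even: "EE t H \<alpha> l N (-j) = EE t H \<alpha> l N j"
  unfolding EE_def Phi_even ..

lemma sum_shift_l:
  "(\<Sum>i=l..n+l. \<Sum>j=l..n+l. F (int j - int i)) = (\<Sum>i=0..n. \<Sum>j=0..n. F (int j - int i))"
proof -
  have "(\<Sum>i=l..n+l. \<Sum>j=l..n+l. F (int j - int i)) = (\<Sum>i=0..n. \<Sum>j=l..n+l. F (int j - int (i + l)))"
    using sum.shift_bounds_cl_nat_ivl[of "\<lambda>i. \<Sum>j=l..n+l. F (int j - int i)" 0 l n] by simp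
  also have "\<dots> = (\<Sum>i=0..n. \<Sum>j=0..n. F (int (j + l) - int (i + l)))"
    using sum.shift_bounds_cl_nat_ivl[of "\<lambda>j. F (int j - int (i + l))" 0 l n for i] by simp
  also have "\<dots> = (\<Sum>i=0..n. \<Sum>j=0..n. F (int j - int i))" by simp
  finally show ?thesis .
qed

lemma sum_row: "(\<Sum>i=0..n. g (int (Suc n) - int i)) = (\<Sum>v=1..Suc n. g (int v))"
proof -
  have "(\<Sum>i=0..n. g (int (Suc n) - int i)) = (\<Sum>v\<in>(\<lambda>i. Suc n - i) ` {0..n}. g (int v))"
    by (subst sum.reindex) (auto simp: inj_on_def of_nat_diff)
  also have "(\<lambda>i. Suc n - i) ` {0..n} = {1..Suc n}"
  proof (intro set_eqI iffI)
    fix v assume "v \<in> {1..Suc n}"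
    then show "v \<in> (\<lambda>i. Suc n - i) ` {0..n}" by (intro image_eqI[of _ _ "Suc n - v"]) auto
  qed auto
  finally show ?thesis .
qed

lemma double_sum_even:
  fixes g :: "int \<Rightarrow> real"
  assumes ev: "\<And>v. g (-v) = g v"
  shows "(\<Sum>i=0..n. \<Sum>j=0..n. g (int j - int i)) = real (n+1) * g 0 + 2 * (\<Sum>v=1..n. (real n + 1 - real v) * g (int v))"
proof (induction n)
  case 0
  then show ?case by simp
next
  case (Suc n)
  have row: "(\<Sum>i=0..n. g (int (Suc n) - int i)) = (\<Sum>v=1..Suc n. g (int v))" by (rule sum_row)
  have col: "(\<Sum>j=0..n. g (int j - int (Suc n))) = (\<Sum>v=1..Suc n. g (int v))"
  proof -
    have "(\<Sum>j=0..n. g (int j - int (Suc n))) = (\<Sum>j=0..n. g (int (Suc n) - int j))"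
      by (intro sum.cong refl) (metis ev minus_diff_eq)
    then show ?thesis using row by simp
  qed
  have "(\<Sum>i=0..Suc n. \<Sum>j=0..Suc n. g (int j - int i))
      = (\<Sum>i=0..n. \<Sum>j=0..Suc n. g (int j - int i)) + (\<Sum>j=0..Suc n. g (int j - int (Suc n)))"
    by simp
  also have "(\<Sum>i=0..n. \<Sum>j=0..Suc n. g (int j - int i)) = (\<Sum>i=0..n. \<Sum>j=0..n. g (int j - int i)) + (\<Sum>i=0..n. g (int (Suc n) - int i))"
    by (simp add: sum.distrib)
  also have "(\<Sum>j=0..Suc n. g (int j - int (Suc n))) = (\<Sum>j=0..n. g (int j - int (Suc n))) + g 0"
    by simp
  finally have "(\<Sum>i=0..Suc n. \<Sum>j=0..Suc n. g (int j - int i))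
      = real (n+1) * g 0 + 2 * (\<Sum>v=1..n. (real n + 1 - real v) * g (int v)) + 2 * (\<Sum>v=1..Suc n. g (int v)) + g 0"
    unfolding Suc.IH row col by simp
  also have "\<dots> = real (Suc n + 1) * g 0 + 2 * (\<Sum>v=1..Suc n. (real (Suc n) + 1 - real v) * g (int v))"
  proof -
    have "(\<Sum>v=1..Suc n. (real (Suc n) + 1 - real v) * g (int v))
        = (\<Sum>v=1..n. (real (Suc n) + 1 - real v) * g (int v)) + g (int (Suc n))" by simp
    also have "(\<Sum>v=1..n. (real (Suc n) + 1 - real v) * g (int v)) = (\<Sum>v=1..n. (real n + 1 - real v) * g (int v)) + (\<Sum>v=1..n. g (int v))"
      by (simp add: sum.distrib[symmetric] algebra_simps)
    finally have "(\<Sum>v=1..Suc n. (real (Suc n) + 1 - real v) * g (int v)) = (\<Sum>v=1..n. (real n + 1 - real v) * g (int v)) + (\<Sum>v=1..n. g (int v)) + g (int (Suc n))" .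
    moreover have "(\<Sum>v=1..Suc n. g (int v)) = (\<Sum>v=1..n. g (int v)) + g (int (Suc n))" by simp
    ultimately show ?thesis by (simp add: algebra_simps)
  qed
  finally show ?case .
qed

lemma has_sum_int_even:
  fixes g :: "int \<Rightarrow> real"
  assumes S: "(\<lambda>k. g (int (Suc k))) sums T" and ev: "\<And>v. g (-v) = g v" and nn: "\<And>v. g v \<ge> 0"
  shows "(g has_sum (g 0 + 2*T)) UNIV"
proof -
  define h1 where "h1 k = int (Suc k)" for k
  define h2 where "h2 k = - int (Suc k)" for k
  have hs: "((\<lambda>k. g (int (Suc k))) has_sum T) UNIV" using S nn by (intro sums_nonneg_imp_has_sum) auto
  have i1: "inj_on h1 UNIV" unfolding h1_def inj_on_def by simp
  have i2: "inj_on h2 UNIV" unfolding h2_def inj_on_def by simp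
  have c1: "g \<circ> h1 = (\<lambda>k. g (int (Suc k)))" unfolding h1_def by (rule ext) simp
  have c2: "g \<circ> h2 = (\<lambda>k. g (int (Suc k)))" unfolding h2_def o_def by (rule ext) (rule ev)
  have a: "(g has_sum T) (range h1)" using has_sum_reindex[OF i1, of g T] hs unfolding c1 by simp
  have b: "(g has_sum T) (range h2)" using has_sum_reindex[OF i2, of g T] hs unfolding c2 by simp
  have c: "(g has_sum g 0) {0}" using has_sum_finite[of "{0}" g] by simp
  have d1: "range h1 \<inter> range h2 = {}" unfolding h1_def h2_def by auto
  have d2: "{0} \<inter> (range h1 \<union> range h2) = {}" unfolding h1_def h2_def by auto
  have U1: "(g has_sum (T + T)) (range h1 \<union> range h2)" by (rule has_sum_Un_disjoint[OF a b d1])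
  have U2: "(g has_sum (g 0 + (T + T))) ({0} \<union> (range h1 \<union> range h2))" by (rule has_sum_Un_disjoint[OF c U1 d2])
  have UN: "{0} \<union> (range h1 \<union> range h2) = UNIV"
  proof (intro set_eqI iffI)
    fix v :: int
    show "v \<in> {0} \<union> (range h1 \<union> range h2)"
    proof (cases "v > 0")
      case True
      then have "v = h1 (nat v - 1)" unfolding h1_def by simp
      then show ?thesis by blast
    next
      case False
      show ?thesis
      proof (cases "v = 0")
        case False
        with \<open>\<not> v > 0\<close> have "v = h2 (nat (-v) - 1)" unfolding h2_def by simp
        then show ?thesis by blast
      qed simp
    qed
  qed simp
  have "g 0 + 2*T = g 0 + (T + T)" by simp
  then show ?thesis using U2 unfolding UN by simp
qed



lemma EE_lim: "(\<lambda>N. EE t H \<alpha> l N j) \<longlonglongrightarrow> Phi H \<alpha> l j"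
proof -
  have "(\<lambda>N. 1 / real N) \<longlonglongrightarrow> 0" by (rule lim_inverse_n')
  then have "(\<lambda>N. (kap t H * Phi (H + 1/2) \<alpha> l j) * (1 / real N)) \<longlonglongrightarrow> (kap t H * Phi (H + 1/2) \<alpha> l j) * 0"
    by (rule tendsto_mult_left)
  then have "(\<lambda>N. Phi H \<alpha> l j + (kap t H * Phi (H + 1/2) \<alpha> l j) * (1 / real N)) \<longlonglongrightarrow> Phi H \<alpha> l j + (kap t H * Phi (H + 1/2) \<alpha> l j) * 0"
    by (rule tendsto_add[OF tendsto_const])
  moreover have "EE t H \<alpha> l N j = Phi H \<alpha> l j + (kap t H * Phi (H + 1/2) \<alpha> l j) * (1 / real N)" for N
    unfolding EE_def by simp
  ultimately show ?thesis by simp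
qed

lemma D_eventually:
  assumes "Phi H \<alpha> l 0 < 0"
  shows "\<exists>N1\<ge>1. \<forall>N\<ge>N1. \<bar>EE t H \<alpha> l N 0\<bar> \<ge> \<bar>Phi H \<alpha> l 0\<bar> / 2"
proof -
  have "\<bar>Phi H \<alpha> l 0\<bar> / 2 > 0" using assms by simp
  from tendstoD[OF EE_lim[of t H \<alpha> l 0] this] obtain N0 where N0: "\<forall>N\<ge>N0. dist (EE t H \<alpha> l N 0) (Phi H \<alpha> l 0) < \<bar>Phi H \<alpha> l 0\<bar> / 2"
    unfolding eventually_sequentially by blast
  show ?thesis
  proof (intro exI conjI allI impI)
    show "max N0 1 \<ge> 1" by simp
    fix N assume "max N0 1 \<le> N"
    then have "dist (EE t H \<alpha> l N 0) (Phi H \<alpha> l 0) < \<bar>Phi H \<alpha> l 0\<bar> / 2" using N0 by simp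
    then show "\<bar>EE t H \<alpha> l N 0\<bar> \<ge> \<bar>Phi H \<alpha> l 0\<bar> / 2" unfolding dist_real_def by linarith
  qed
qed

lemma EE_bound:
  assumes bA: "\<forall>v\<ge>1. \<bar>Phi H \<alpha> l (int v)\<bar> \<le> CA * real v powr e"
    and bB: "\<forall>v\<ge>1. \<bar>Phi (H+1/2) \<alpha> l (int v)\<bar> \<le> CB * real v powr (e+1)"
    and v: "1 \<le> v" "v \<le> N"
  shows "\<bar>EE t H \<alpha> l N (int v)\<bar> \<le> (CA + \<bar>kap t H\<bar> * CB) * real v powr e"
proof -
  have CB: "CB \<ge> 0" using bB[rule_format, of 1] by simp
  have Npos: "real N > 0" using v by simp
  have "\<bar>EE t H \<alpha> l N (int v)\<bar> \<le> \<bar>Phi H \<alpha> l (int v)\<bar> + \<bar>kap t H\<bar> * \<bar>Phi (H+1/2) \<alpha> l (int v)\<bar> / real N"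
  proof -
    have "\<bar>kap t H * Phi (H + 1/2) \<alpha> l (int v) / real N\<bar> = \<bar>kap t H\<bar> * \<bar>Phi (H+1/2) \<alpha> l (int v)\<bar> / real N"
      using Npos by (simp add: abs_mult abs_divide)
    then show ?thesis unfolding EE_def
      using abs_triangle_ineq[of "Phi H \<alpha> l (int v)" "kap t H * Phi (H + 1/2) \<alpha> l (int v) / real N"] by linarith
  qed
  also have "\<dots> \<le> CA * real v powr e + \<bar>kap t H\<bar> * (CB * real v powr (e+1)) / real N"
    using bA bB v Npos by (intro add_mono divide_right_mono mult_left_mono) auto
  also have "\<bar>kap t H\<bar> * (CB * real v powr (e+1)) / real N \<le> \<bar>kap t H\<bar> * CB * real v powr e"
  proof -
    have "real v powr (e+1) = real v powr e * real v" using v by (simp add: powr_add)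
    then have "\<bar>kap t H\<bar> * (CB * real v powr (e+1)) / real N = \<bar>kap t H\<bar> * CB * real v powr e * (real v / real N)"
      by simp
    also have "\<dots> \<le> \<bar>kap t H\<bar> * CB * real v powr e * 1"
      using v CB Npos by (intro mult_left_mono) auto
    finally show ?thesis by simp
  qed
  finally show ?thesis by (simp add: algebra_simps)
qed

lemma rho_bound:
  assumes bA: "\<forall>v\<ge>1. \<bar>Phi H \<alpha> l (int v)\<bar> \<le> CA * real v powr e"
    and bB: "\<forall>v\<ge>1. \<bar>Phi (H+1/2) \<alpha> l (int v)\<bar> \<le> CB * real v powr (e+1)"
    and D: "\<bar>EE t H \<alpha> l N 0\<bar> \<ge> \<bar>Phi H \<alpha> l 0\<bar> / 2" and A0: "Phi H \<alpha> l 0 < 0"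
    and v: "1 \<le> v" "v \<le> N" and t: "t > 0" and H: "H > 0"
  shows "\<bar>rhoN t H \<alpha> l N (int v)\<bar> \<le> (2 * (CA + \<bar>kap t H\<bar> * CB) / \<bar>Phi H \<alpha> l 0\<bar>) * real v powr e"
proof -
  have N: "N \<ge> 1" using v by simp
  have Dpos: "\<bar>EE t H \<alpha> l N 0\<bar> > 0" using D A0 by linarith
  have "\<bar>rhoN t H \<alpha> l N (int v)\<bar> = \<bar>EE t H \<alpha> l N (int v)\<bar> / \<bar>EE t H \<alpha> l N 0\<bar>"
    unfolding rhoN_eq[OF t N H] by (simp add: abs_divide)
  also have "\<dots> \<le> (CA + \<bar>kap t H\<bar> * CB) * real v powr e / (\<bar>Phi H \<alpha> l 0\<bar> / 2)"
  proof (rule frac_le)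
    show "0 \<le> (CA + \<bar>kap t H\<bar> * CB) * real v powr e"
      using EE_bound[OF bA bB v, of t] abs_ge_zero order_trans by blast
    show "\<bar>EE t H \<alpha> l N (int v)\<bar> \<le> (CA + \<bar>kap t H\<bar> * CB) * real v powr e" by (rule EE_bound[OF bA bB v])
    show "0 < \<bar>Phi H \<alpha> l 0\<bar> / 2" using A0 by simp
    show "\<bar>Phi H \<alpha> l 0\<bar> / 2 \<le> \<bar>EE t H \<alpha> l N 0\<bar>" by (rule D)
  qed
  also have "\<dots> = (2 * (CA + \<bar>kap t H\<bar> * CB) / \<bar>Phi H \<alpha> l 0\<bar>) * real v powr e" by simp
  finally show ?thesis .
qed



lemma rho_even:
  assumes "t > 0" "N \<ge> 1" "H > 0"
  shows "rhoN t H \<alpha> l N (-j) = rhoN t H \<alpha> l N j"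
  unfolding rhoN_eq[OF assms] EE_even ..

lemma rho_zero:
  assumes "t > 0" "N \<ge> 1" "H > 0" "EE t H \<alpha> l N 0 \<noteq> 0"
  shows "rhoN t H \<alpha> l N 0 = 1"
  unfolding rhoN_eq[OF assms(1-3)] using assms(4) by simp

lemma X_form:
  assumes "t > 0" "n \<ge> 1" "H > 0" "EE t H \<alpha> l (n+l) 0 \<noteq> 0"
  shows "(1 / (real (n+l) - real l)) * (\<Sum>i=l..n+l. \<Sum>j=l..n+l. rhoN t H \<alpha> l (n+l) (int j - int i) ^ m)
     = (real n + 1) / real n + 2 * (\<Sum>v=1..n. (real n + 1 - real v) / real n * rhoN t H \<alpha> l (n+l) (int v) ^ m)"
proof -
  have N1: "n + l \<ge> 1" using assms by simp
  define g where "g j = rhoN t H \<alpha> l (n+l) j ^ m" for j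
  have ev: "g (-v) = g v" for v unfolding g_def rho_even[OF assms(1) N1 assms(3)] ..
  have g0: "g 0 = 1" unfolding g_def rho_zero[OF assms(1) N1 assms(3,4)] by simp
  have "(\<Sum>i=l..n+l. \<Sum>j=l..n+l. g (int j - int i)) = (\<Sum>i=0..n. \<Sum>j=0..n. g (int j - int i))"
    by (rule sum_shift_l)
  also have "\<dots> = real (n+1) * g 0 + 2 * (\<Sum>v=1..n. (real n + 1 - real v) * g (int v))"
    by (rule double_sum_even[of g, OF ev])
  finally have e: "(\<Sum>i=l..n+l. \<Sum>j=l..n+l. g (int j - int i)) = real (n+1) + 2 * (\<Sum>v=1..n. (real n + 1 - real v) * g (int v))"
    unfolding g0 by simp
  have np: "real n > 0" using assms by simp
  show ?thesis
    unfolding g_def[symmetric] e using np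
    by (simp add: sum_divide_distrib[symmetric] add_divide_distrib algebra_simps)
qed

lemma part1:
  assumes H: "1/2 < H" "H < 1" and t: "t > 1" and filt: "is_filter \<alpha> l p" "p \<ge> 1" and q: "q \<ge> 1"
    and hyp: "H < real p - 1 / (4 * real q)"
  shows "\<exists>S. ((\<lambda>v. phi H \<alpha> l v ^ (2 * q)) has_sum S) UNIV \<and>
                ((\<lambda>N. (1 / (real N - real l)) *
                    (\<Sum>i=l..N. \<Sum>j=l..N. rhoN t H \<alpha> l N (int j - int i) ^ (2 * q)))
                 \<longlonglongrightarrow> S)"
proof -
  have t0: "t > 0" and H0: "H > 0" using t H by auto
  define A0 where "A0 = Phi H \<alpha> l 0"
  have A0: "A0 < 0" unfolding A0_def by (rule A0_neg[OF filt H])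
  define e where "e = 2*H - 2*real p"
  obtain CA where CA: "\<forall>v\<ge>1. \<bar>Phi H \<alpha> l (int v)\<bar> \<le> CA * real v powr e"
    using Phi_bound[OF filt(1), of H] unfolding e_def by blast
  obtain CB0 where CB0: "\<forall>v\<ge>1. \<bar>Phi (H+1/2) \<alpha> l (int v)\<bar> \<le> CB0 * real v powr (2*(H+1/2) - 2*real p)"
    using Phi_bound[OF filt(1), of "H+1/2"] by blast
  have ee: "2*(H+1/2) - 2*real p = e + 1" unfolding e_def by simp
  have CB: "\<forall>v\<ge>1. \<bar>Phi (H+1/2) \<alpha> l (int v)\<bar> \<le> CB0 * real v powr (e+1)" using CB0 unfolding ee .
  obtain N1 where N1: "N1 \<ge> 1" "\<forall>N\<ge>N1. \<bar>EE t H \<alpha> l N 0\<bar> \<ge> \<bar>A0\<bar> / 2"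
    using D_eventually[OF A0[unfolded A0_def], of t] unfolding A0_def by blast
  define R where "R = 2 * (CA + \<bar>kap t H\<bar> * CB0) / \<bar>A0\<bar>"
  have rb: "\<bar>rhoN t H \<alpha> l N (int v)\<bar> \<le> R * real v powr e" if "N \<ge> N1" "1 \<le> v" "v \<le> N" for N v
    unfolding R_def A0_def
    by (rule rho_bound[OF CA CB _ A0[unfolded A0_def] that(2,3) t0 H0]) (use N1 that A0_def in auto)
  define a where "a k n = (if 1 \<le> k \<and> k \<le> n then (real n + 1 - real k) / real n * rhoN t H \<alpha> l (n+l) (int k) ^ (2*q) else 0)" for k n
  define b where "b k = (if 1 \<le> k then phi H \<alpha> l (int k) ^ (2*q) else 0)" for k :: nat
  define M where "M k = R ^ (2*q) * real k powr (real (2*q) * e)" for k :: nat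
  have lim_a: "(\<lambda>n. a k n) \<longlonglongrightarrow> b k" for k
  proof (cases "k \<ge> 1")
    case False
    then show ?thesis unfolding a_def b_def by simp
  next
    case True
    have ev: "\<forall>\<^sub>F n in sequentially. (real n + 1 - real k) / real n * (EE t H \<alpha> l (n+l) (int k) / EE t H \<alpha> l (n+l) 0) ^ (2*q) = a k n"
      unfolding eventually_sequentially
    proof (intro exI allI impI)
      fix n assume "k \<le> n"
      then have nl: "n + l \<ge> 1" using True by simp
      show "(real n + 1 - real k) / real n * (EE t H \<alpha> l (n+l) (int k) / EE t H \<alpha> l (n+l) 0) ^ (2*q) = a k n"
        unfolding a_def rhoN_eq[OF t0 nl H0] using True \<open>k \<le> n\<close> by simp
    qed
    have w: "(\<lambda>n. (real n + 1 - real k) / real n) \<longlonglongrightarrow> 1" by real_asymp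
    have E1: "(\<lambda>n. EE t H \<alpha> l (n+l) (int k)) \<longlonglongrightarrow> Phi H \<alpha> l (int k)"
      by (rule LIMSEQ_ignore_initial_segment[OF EE_lim])
    have E0: "(\<lambda>n. EE t H \<alpha> l (n+l) 0) \<longlonglongrightarrow> A0"
      unfolding A0_def by (rule LIMSEQ_ignore_initial_segment[OF EE_lim])
    have "(\<lambda>n. (real n + 1 - real k) / real n * (EE t H \<alpha> l (n+l) (int k) / EE t H \<alpha> l (n+l) 0) ^ (2*q))
          \<longlonglongrightarrow> 1 * (Phi H \<alpha> l (int k) / A0) ^ (2*q)"
      using A0 by (intro tendsto_mult w tendsto_power tendsto_divide E1 E0) auto
    then have "(\<lambda>n. a k n) \<longlonglongrightarrow> 1 * (Phi H \<alpha> l (int k) / A0) ^ (2*q)"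
      using tendsto_cong[OF ev] by blast
    then show ?thesis unfolding b_def phi_def A0_def using True by simp
  qed
  have bnd: "norm (a k n) \<le> M k" if "n \<ge> N1" for k n
  proof -
    show "norm (a k n) \<le> M k"
    proof (cases "1 \<le> k \<and> k \<le> n")
      case False
      have "a k n = 0" unfolding a_def using False by (rule if_not_P)
      moreover have "M k \<ge> 0"
      proof -
        have "CA \<ge> 0" using CA[rule_format, of 1] by simp
        moreover have "CB0 \<ge> 0" using CB[rule_format, of 1] by simp
        ultimately have "R \<ge> 0" unfolding R_def by simp
        then show ?thesis unfolding M_def by simp
      qed
      ultimately show ?thesis by simp
    next
      case True
      have kn: "k \<le> n + l" "n + l \<ge> N1" using True that by auto
      have r: "\<bar>rhoN t H \<alpha> l (n+l) (int k)\<bar> \<le> R * real k powr e" by (rule rb[OF kn(2)]) (use True kn in auto)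
      have wt: "0 \<le> (real n + 1 - real k) / real n" "(real n + 1 - real k) / real n \<le> 1" using True by auto
      have "norm (a k n) = (real n + 1 - real k) / real n * \<bar>rhoN t H \<alpha> l (n+l) (int k)\<bar> ^ (2*q)"
        unfolding a_def using True wt by (simp add: abs_mult power_abs)
      also have "\<dots> \<le> 1 * \<bar>rhoN t H \<alpha> l (n+l) (int k)\<bar> ^ (2*q)"
        using wt by (intro mult_right_mono) auto
      also have "\<dots> \<le> (R * real k powr e) ^ (2*q)"
        using r by (simp add: power_mono)
      also have "\<dots> = M k"
        unfolding M_def using True by (simp add: power_mult_distrib powr_power)
      finally show ?thesis .
    qed
  qed
  have bound: "\<forall>\<^sub>F (k, n) in at_top \<times>\<^sub>F sequentially. norm (a k n) \<le> M k"
    unfolding eventually_prod_filter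
    apply (rule exI[where x="\<lambda>k. True"])
    apply (rule exI[where x="\<lambda>n. n \<ge> N1"])
    using bnd by (auto intro: eventually_ge_at_top)
  have summ: "summable M"
  proof -
    have "real (2*q) * e < -1"
    proof -
      have "real q > 0" using q by simp
      have "e < - 1 / (2 * real q)" unfolding e_def using hyp by (simp add: field_simps)
      then have "real (2*q) * e < real (2*q) * (- 1 / (2 * real q))" using \<open>real q > 0\<close>
        by (intro mult_strict_left_mono) auto
      also have "\<dots> = -1" using \<open>real q > 0\<close> by simp
      finally show ?thesis .
    qed
    then have "summable (\<lambda>k. real k powr (real (2*q) * e))" by (simp add: summable_real_powr_iff)
    then show ?thesis unfolding M_def by (rule summable_mult)
  qed
  have tan: "eventually (\<lambda>n. summable (\<lambda>k. norm (a k n))) sequentially \<and>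
           summable (\<lambda>n. norm (b n)) \<and>
           ((\<lambda>n. suminf (\<lambda>k. a k n)) \<longlonglongrightarrow> suminf b)"
    by (rule tannerys_theorem[OF lim_a bound summ]) simp
  have sumb: "summable b" using tan summable_norm_cancel[of b] by blast
  have lim_s: "(\<lambda>n. suminf (\<lambda>k. a k n)) \<longlonglongrightarrow> suminf b" using tan by blast
  define S where "S = 1 + 2 * suminf b"
  have fin: "suminf (\<lambda>k. a k n) = (\<Sum>v=1..n. (real n + 1 - real v) / real n * rhoN t H \<alpha> l (n+l) (int v) ^ (2*q))" for n
  proof -
    have "suminf (\<lambda>k. a k n) = (\<Sum>k\<in>{1..n}. a k n)" by (rule suminf_finite) (auto simp: a_def)
    also have "\<dots> = (\<Sum>v=1..n. (real n + 1 - real v) / real n * rhoN t H \<alpha> l (n+l) (int v) ^ (2*q))"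
      by (intro sum.cong refl) (auto simp: a_def)
    finally show ?thesis .
  qed
  have lim_main: "(\<lambda>n. (1 / (real (n+l) - real l)) * (\<Sum>i=l..n+l. \<Sum>j=l..n+l. rhoN t H \<alpha> l (n+l) (int j - int i) ^ (2 * q))) \<longlonglongrightarrow> S"
  proof -
    have ev: "\<forall>\<^sub>F n in sequentially. (real n + 1) / real n + 2 * suminf (\<lambda>k. a k n) =
       (1 / (real (n+l) - real l)) * (\<Sum>i=l..n+l. \<Sum>j=l..n+l. rhoN t H \<alpha> l (n+l) (int j - int i) ^ (2 * q))"
      unfolding eventually_sequentially
    proof (intro exI allI impI)
      fix n assume n: "n \<ge> N1"
      then have n1: "n \<ge> 1" using N1 by simp
      have "EE t H \<alpha> l (n+l) 0 \<noteq> 0" using N1(2)[rule_format, of "n+l"] n A0 by auto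
      then show "(real n + 1) / real n + 2 * suminf (\<lambda>k. a k n) =
       (1 / (real (n+l) - real l)) * (\<Sum>i=l..n+l. \<Sum>j=l..n+l. rhoN t H \<alpha> l (n+l) (int j - int i) ^ (2 * q))"
        unfolding fin by (rule X_form[OF t0 n1 H0, symmetric])
    qed
    have "(\<lambda>n. (real n + 1) / real n) \<longlonglongrightarrow> 1" by real_asymp
    then have "(\<lambda>n. (real n + 1) / real n + 2 * suminf (\<lambda>k. a k n)) \<longlonglongrightarrow> 1 + 2 * suminf b"
      by (intro tendsto_add tendsto_mult_left lim_s)
    then show ?thesis unfolding S_def using tendsto_cong[OF ev] by blast
  qed
  have hs: "((\<lambda>v. phi H \<alpha> l v ^ (2 * q)) has_sum S) UNIV"
  proof -
    define g where "g v = phi H \<alpha> l v ^ (2 * q)" for v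
    have ev: "g (-v) = g v" for v unfolding g_def phi_def Phi_even ..
    have nn: "g v \<ge> 0" for v unfolding g_def by (simp add: zero_le_even_power)
    have g0: "g 0 = 1" unfolding g_def phi_def using A0 unfolding A0_def by simp
    have "b sums suminf b" using sumb by (rule summable_sums)
    then have "(\<lambda>k. b (Suc k)) sums suminf b" using sums_Suc_iff[of b] by (simp add: b_def)
    then have "(\<lambda>k. g (int (Suc k))) sums suminf b" unfolding b_def g_def by simp
    from has_sum_int_even[OF this ev nn] have "(g has_sum (1 + 2 * suminf b)) UNIV" unfolding g0 .
    then show ?thesis unfolding S_def g_def .
  qed
  show ?thesis
    by (intro exI[of _ S] conjI hs LIMSEQ_offset[OF lim_main])
qed



lemma harm_sum: "(\<Sum>v=1..n. (real n + 1 - real v) / real v) = (real n + 1) * harm n - real n"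
proof -
  have "(\<Sum>v=1..n. (real n + 1 - real v) / real v) = (\<Sum>v=1..n. (real n + 1) * inverse (real v) - 1)"
    by (intro sum.cong refl) (auto simp: field_simps)
  also have "\<dots> = (real n + 1) * harm n - real n"
    by (simp add: sum_subtractf sum_distrib_left harm_def)
  finally show ?thesis .
qed

lemma HH_lim: "(\<lambda>n. ((real n + 1) * harm n - real n) / (real n * ln (real n))) \<longlonglongrightarrow> (1::real)"
proof -
  have g: "(\<lambda>n. harm n - ln (real n) :: real) \<longlonglongrightarrow> euler_mascheroni" by (rule euler_mascheroni_LIMSEQ)
  have il: "(\<lambda>n. 1 / ln (real n) :: real) \<longlonglongrightarrow> 0" by real_asymp
  have w: "(\<lambda>n. (real n + 1) / real n :: real) \<longlonglongrightarrow> 1" by real_asymp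
  have "(\<lambda>n. (real n + 1) / real n * (1 + (harm n - ln (real n)) * (1 / ln (real n))) - 1 / ln (real n)) \<longlonglongrightarrow>
        1 * (1 + euler_mascheroni * 0) - 0"
    by (intro tendsto_intros w g il)
  moreover have "\<forall>\<^sub>F n in sequentially. (real n + 1) / real n * (1 + (harm n - ln (real n)) * (1 / ln (real n))) - 1 / ln (real n)
      = ((real n + 1) * harm n - real n) / (real n * ln (real n))"
    unfolding eventually_sequentially
  proof (intro exI allI impI)
    fix n :: nat assume "n \<ge> 2"
    then have "ln (real n) > 0" "real n > 0" by auto
    then show "(real n + 1) / real n * (1 + (harm n - ln (real n)) * (1 / ln (real n))) - 1 / ln (real n)
      = ((real n + 1) * harm n - real n) / (real n * ln (real n))"
      by (simp add: field_simps)
  qed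
  ultimately show ?thesis using tendsto_cong by force
qed



lemma powr_half_sq: "real v > 0 \<Longrightarrow> (real v powr (-1/2))^2 = 1 / real v"
proof -
  assume v: "real v > 0"
  have "(real v powr (-1/2))^2 = real v powr (-1/2) * real v powr (-1/2)" by (simp add: power2_eq_square)
  also have "\<dots> = real v powr (-1)" by (simp add: powr_add[symmetric])
  also have "\<dots> = 1 / real v" using v by (simp add: powr_minus_divide)
  finally show ?thesis .
qed

lemma A_sq_bound:
  assumes filt: "is_filter \<alpha> l 1"
  shows "\<exists>CQ. \<forall>v\<ge>1. \<bar>Phi (3/4) \<alpha> l (int v)^2 - (KPhi (3/4) \<alpha> l 1)^2 / real v\<bar> \<le> CQ * real v powr (-2)"
proof -
  obtain CA where CA: "\<forall>v\<ge>1. \<bar>Phi (3/4) \<alpha> l (int v)\<bar> \<le> CA * real v powr (2*(3/4) - 2*real (1::nat))"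
    using Phi_bound[OF filt, of "3/4"] by blast
  define K where "K = KPhi (3/4) \<alpha> l 1"
  define C where "C = CPhi (3/4) \<alpha> l 1"
  have C0: "C \<ge> 0" unfolding C_def by (rule CPhi_nonneg)
  show ?thesis
  proof (rule global_bound)
    fix v :: nat assume v: "v \<ge> 2*l + 1"
    have vpos: "real v > 0" using v by simp
    define a where "a = Phi (3/4) \<alpha> l (int v)"
    define k where "k = K * real v powr (-1/2)"
    have e1: "\<bar>a - k\<bar> \<le> C * real v powr (-3/2)"
      using Phi_expand_nat[OF filt, of v "3/4"] v unfolding a_def k_def K_def C_def by simp
    have "\<bar>a\<bar> \<le> CA * real v powr (-1/2)" using CA v unfolding a_def by simp
    then have e2: "\<bar>a + k\<bar> \<le> (CA + \<bar>K\<bar>) * real v powr (-1/2)"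
      unfolding k_def using abs_triangle_ineq[of a "K * real v powr (-1/2)"] by (simp add: abs_mult algebra_simps)
    have "a^2 - K^2 / real v = (a - k) * (a + k)"
      unfolding k_def using powr_half_sq[OF vpos] by (simp add: algebra_simps power2_eq_square power_mult_distrib)
    then have "\<bar>a^2 - K^2 / real v\<bar> = \<bar>a - k\<bar> * \<bar>a + k\<bar>" by (simp add: abs_mult)
    also have "\<dots> \<le> (C * real v powr (-3/2)) * ((CA + \<bar>K\<bar>) * real v powr (-1/2))"
      using e1 e2 by (intro mult_mono) auto
    also have "\<dots> = C * (CA + \<bar>K\<bar>) * (real v powr (-3/2) * real v powr (-1/2))" by simp
    also have "real v powr (-3/2) * real v powr (-1/2) = real v powr (-2)"
      by (simp add: powr_add[symmetric])
    finally show "\<bar>Phi (3/4) \<alpha> l (int v)^2 - (KPhi (3/4) \<alpha> l 1)^2 / real v\<bar> \<le> C * (CA + \<bar>K\<bar>) * real v powr (-2)"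
      unfolding a_def K_def .
  qed
qed



lemma part2:
  assumes t: "t > 1" and filt: "is_filter \<alpha> l p" and p1: "p = 1" and H34: "H = 3/4"
  shows "\<exists>c > 0. (\<lambda>N. (1 / ((real N - real l) * ln (real N - real l))) *
                    (\<Sum>i=l..N. \<Sum>j=l..N. rhoN t H \<alpha> l N (int j - int i) ^ 2))
                 \<longlonglongrightarrow> c"
proof -
  have filt1: "is_filter \<alpha> l 1" using filt p1 by simp
  have t0: "t > 0" using t by simp
  have H0: "H > 0" "1/2 < H" "H < 1" using H34 by auto
  define A0 where "A0 = Phi H \<alpha> l 0"
  have A0: "A0 < 0" unfolding A0_def using A0_neg[OF filt1 _ H0(2,3)] by simp
  obtain CA0 where CA0: "\<forall>v\<ge>1. \<bar>Phi H \<alpha> l (int v)\<bar> \<le> CA0 * real v powr (2*H - 2*real (1::nat))"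
    using Phi_bound[OF filt1, of H] by blast
  have CA: "\<forall>v\<ge>1. \<bar>Phi H \<alpha> l (int v)\<bar> \<le> CA0 * real v powr (-1/2)" using CA0 unfolding H34 by simp
  obtain CB0 where CB0: "\<forall>v\<ge>1. \<bar>Phi (H+1/2) \<alpha> l (int v)\<bar> \<le> CB0 * real v powr (2*(H+1/2) - 2*real (1::nat))"
    using Phi_bound[OF filt1, of "H+1/2"] by blast
  have CB: "\<forall>v\<ge>1. \<bar>Phi (H+1/2) \<alpha> l (int v)\<bar> \<le> CB0 * real v powr (1/2)" using CB0 unfolding H34 by simp
  have CA_nn: "CA0 \<ge> 0" using CA[rule_format, of 1] by simp
  have CB_nn: "CB0 \<ge> 0" using CB[rule_format, of 1] by simp
  define K where "K = KPhi H \<alpha> l 1"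
  have K: "K \<noteq> 0" unfolding K_def by (rule KPhi_nz[OF filt1 H0(2,3)])
  obtain CQ where CQ: "\<forall>v\<ge>1. \<bar>Phi H \<alpha> l (int v)^2 - K^2 / real v\<bar> \<le> CQ * real v powr (-2)"
    using A_sq_bound[OF filt1] unfolding K_def H34 by blast
  have CQ_nn: "CQ \<ge> 0" using CQ[rule_format, of 1] by simp
  define kp where "kp = kap t H"
  obtain N1 where N1: "N1 \<ge> 1" "\<forall>N\<ge>N1. \<bar>EE t H \<alpha> l N 0\<bar> \<ge> \<bar>A0\<bar> / 2"
    using D_eventually[OF A0[unfolded A0_def], of t] unfolding A0_def by blast
  define Z where "Z = suminf (\<lambda>v::nat. real v powr (-2))"
  have Zs: "summable (\<lambda>v::nat. real v powr (-2))" by (simp add: summable_real_powr_iff)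
  have Zb: "(\<Sum>v=1..n. real v powr (-2)) \<le> Z" for n
    unfolding Z_def by (rule sum_le_suminf[OF Zs]) auto
  define C2 where "C2 = 2 * \<bar>kp\<bar> * CA0 * CB0 + kp^2 * CB0^2"
  have C2_nn: "C2 \<ge> 0" unfolding C2_def using CA_nn CB_nn by simp
  have rbnd: "\<bar>EE t H \<alpha> l N (int v) ^ 2 - K^2 / real v\<bar> \<le> CQ * real v powr (-2) + C2 / real N"
    if v: "1 \<le> v" "v \<le> N" for N v
  proof -
    define a where "a = Phi H \<alpha> l (int v)"
    define b where "b = Phi (H+1/2) \<alpha> l (int v)"
    have Np: "real N > 0" using v by simp
    have vp: "real v > 0" using v by simp
    have ha: "\<bar>a\<bar> \<le> CA0 * real v powr (-1/2)" unfolding a_def using CA v by simp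
    have hb: "\<bar>b\<bar> \<le> CB0 * real v powr (1/2)" unfolding b_def using CB v by simp
    have hq: "\<bar>a^2 - K^2 / real v\<bar> \<le> CQ * real v powr (-2)" unfolding a_def using CQ v by simp
    have ab: "\<bar>a * b\<bar> \<le> CA0 * CB0"
    proof -
      have "\<bar>a * b\<bar> \<le> (CA0 * real v powr (-1/2)) * (CB0 * real v powr (1/2))"
        unfolding abs_mult by (intro mult_mono ha hb) (use CA_nn in auto)
      also have "real v powr (-1/2) * real v powr (1/2) = 1" using vp by (simp add: powr_add[symmetric])
      then have "(CA0 * real v powr (-1/2)) * (CB0 * real v powr (1/2)) = CA0 * CB0"
        by (simp add: algebra_simps)
      finally show ?thesis .
    qed
    have bb: "b^2 \<le> CB0^2 * real v"
    proof -
      have "b^2 = \<bar>b\<bar>^2" by simp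
      also have "\<dots> \<le> (CB0 * real v powr (1/2))^2" by (intro power_mono hb) auto
      also have "(real v powr (1/2))^2 = real v" using vp by (simp add: power2_eq_square powr_add[symmetric])
      then have "(CB0 * real v powr (1/2))^2 = CB0^2 * real v" by (simp add: power_mult_distrib)
      finally show ?thesis .
    qed
    have e: "EE t H \<alpha> l N (int v) ^ 2 - K^2 / real v = (a^2 - K^2 / real v) + 2 * kp * (a * b) / real N + kp^2 * b^2 / (real N)^2"
      unfolding EE_def a_def b_def kp_def using Np by (simp add: power2_eq_square field_simps)
    have t2: "\<bar>2 * kp * (a * b) / real N\<bar> \<le> 2 * \<bar>kp\<bar> * CA0 * CB0 / real N"
      using ab Np by (simp add: abs_mult divide_right_mono mult_left_mono)
    have t3: "\<bar>kp^2 * b^2 / (real N)^2\<bar> \<le> kp^2 * CB0^2 / real N"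
    proof -
      have "\<bar>kp^2 * b^2 / (real N)^2\<bar> = kp^2 * b^2 / (real N)^2" by simp
      also have "\<dots> \<le> kp^2 * (CB0^2 * real v) / (real N)^2"
        using bb by (intro divide_right_mono mult_left_mono) auto
      also have "\<dots> \<le> kp^2 * (CB0^2 * real N) / (real N)^2"
        using v by (intro divide_right_mono mult_left_mono) auto
      also have "\<dots> = kp^2 * CB0^2 / real N" using Np by (simp add: power2_eq_square)
      finally show ?thesis .
    qed
    have "\<bar>EE t H \<alpha> l N (int v) ^ 2 - K^2 / real v\<bar> \<le> \<bar>a^2 - K^2 / real v\<bar> + \<bar>2 * kp * (a * b) / real N\<bar> + \<bar>kp^2 * b^2 / (real N)^2\<bar>"
      unfolding e by (rule order_trans[OF abs_triangle_ineq add_right_mono[OF abs_triangle_ineq]])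
    also have "\<dots> \<le> CQ * real v powr (-2) + (2 * \<bar>kp\<bar> * CA0 * CB0 / real N + kp^2 * CB0^2 / real N)"
      using hq t2 t3 by linarith
    also have "2 * \<bar>kp\<bar> * CA0 * CB0 / real N + kp^2 * CB0^2 / real N = C2 / real N"
      unfolding C2_def by (simp add: add_divide_distrib)
    finally show ?thesis .
  qed
  define err where "err n = (1 / real n) * (\<Sum>v=1..n. (real n + 1 - real v) * (EE t H \<alpha> l (n+l) (int v) ^ 2 - K^2 / real v))" for n
  have err_b: "\<bar>err n\<bar> \<le> 2 * (CQ * Z + C2)" if n: "n \<ge> 1" for n
  proof -
    have np: "real n > 0" using n by simp
    have Nn: "real (n+l) \<ge> real n" by simp
    have "\<bar>\<Sum>v=1..n. (real n + 1 - real v) * (EE t H \<alpha> l (n+l) (int v) ^ 2 - K^2 / real v)\<bar>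
        \<le> (\<Sum>v=1..n. (real n + 1) * (CQ * real v powr (-2) + C2 / real (n+l)))"
    proof (rule order_trans[OF sum_abs], rule sum_mono)
      fix v assume v: "v \<in> {1..n}"
      have "\<bar>(real n + 1 - real v) * (EE t H \<alpha> l (n+l) (int v) ^ 2 - K^2 / real v)\<bar>
         = (real n + 1 - real v) * \<bar>EE t H \<alpha> l (n+l) (int v) ^ 2 - K^2 / real v\<bar>"
        using v by (simp add: abs_mult)
      also have "\<dots> \<le> (real n + 1) * (CQ * real v powr (-2) + C2 / real (n+l))"
        using v rbnd[of v "n+l"] CQ_nn C2_nn by (intro mult_mono) auto
      finally show "\<bar>(real n + 1 - real v) * (EE t H \<alpha> l (n+l) (int v) ^ 2 - K^2 / real v)\<bar>
         \<le> (real n + 1) * (CQ * real v powr (-2) + C2 / real (n+l))" .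
    qed
    also have "\<dots> = (real n + 1) * ((\<Sum>v=1..n. CQ * real v powr (-2)) + (\<Sum>v=1..n. C2 / real (n+l)))"
      by (simp only: sum_distrib_left[symmetric] sum.distrib)
    also have "\<dots> = (real n + 1) * (CQ * (\<Sum>v=1..n. real v powr (-2)) + real n * (C2 / real (n+l)))"
      by (simp only: sum_distrib_left[symmetric] sum_constant card_atLeastAtMost) simp
    also have "\<dots> \<le> (real n + 1) * (CQ * Z + C2)"
    proof -
      have "CQ * (\<Sum>v=1..n. real v powr (-2)) \<le> CQ * Z" using Zb CQ_nn by (intro mult_left_mono) auto
      moreover have "real n * (C2 / real (n+l)) \<le> C2"
      proof -
        have "real n / real (n+l) \<le> 1" using np by simp
        then have "C2 * (real n / real (n+l)) \<le> C2 * 1" using C2_nn by (intro mult_left_mono) auto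
        then show ?thesis by (simp add: mult.commute)
      qed
      ultimately show ?thesis by (intro mult_left_mono) auto
    qed
    finally have "\<bar>\<Sum>v=1..n. (real n + 1 - real v) * (EE t H \<alpha> l (n+l) (int v) ^ 2 - K^2 / real v)\<bar> \<le> (real n + 1) * (CQ * Z + C2)" .
    then have "\<bar>err n\<bar> \<le> (real n + 1) / real n * (CQ * Z + C2)"
      unfolding err_def using np by (simp add: abs_mult divide_right_mono)
    also have "\<dots> \<le> 2 * (CQ * Z + C2)"
    proof -
      have "(real n + 1) / real n \<le> 2" using n np by (simp add: field_simps)
      moreover have "CQ * Z + C2 \<ge> 0"
      proof -
        have "Z \<ge> 0" using Zb[of 0] by simp
        then show ?thesis using CQ_nn C2_nn by simp
      qed
      ultimately show ?thesis by (intro mult_right_mono) auto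
    qed
    finally show ?thesis .
  qed
  define HH where "HH n = ((real n + 1) * harm n - real n) / (real n * ln (real n))" for n :: nat
  define D where "D n = EE t H \<alpha> l (n+l) 0" for n
  define Y where "Y N = (1 / ((real N - real l) * ln (real N - real l))) * (\<Sum>i=l..N. \<Sum>j=l..N. rhoN t H \<alpha> l N (int j - int i) ^ 2)" for N
  have Yeq: "Y (n+l) = ((real n + 1) / real n) / ln (real n) + 2 * inverse ((D n)^2) * (K^2 * HH n + err n / ln (real n))"
    if n: "n \<ge> max N1 2" for n
  proof -
    have n1: "n \<ge> 1" and nN1: "n + l \<ge> N1" and n2: "n \<ge> 2" using n N1 by auto
    have np: "real n > 0" using n1 by simp
    have lnp: "ln (real n) > 0" using n2 by simp
    have Dnz: "D n \<noteq> 0" unfolding D_def using N1(2)[rule_format, OF nN1] A0 by auto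
    have nl1: "n + l \<ge> 1" using n1 by simp
    have X: "(1 / (real (n+l) - real l)) * (\<Sum>i=l..n+l. \<Sum>j=l..n+l. rhoN t H \<alpha> l (n+l) (int j - int i) ^ 2)
     = (real n + 1) / real n + 2 * (\<Sum>v=1..n. (real n + 1 - real v) / real n * rhoN t H \<alpha> l (n+l) (int v) ^ 2)"
      by (rule X_form[OF t0 n1 H0(1)]) (use Dnz D_def in simp)
    define Sv where "Sv = (\<Sum>v=1..n. (real n + 1 - real v) * EE t H \<alpha> l (n+l) (int v) ^ 2)"
    have s1: "(\<Sum>v=1..n. (real n + 1 - real v) / real n * rhoN t H \<alpha> l (n+l) (int v) ^ 2) = Sv / (real n * (D n)^2)"
      unfolding Sv_def sum_divide_distrib
      by (intro sum.cong refl) (simp add: rhoN_eq[OF t0 nl1 H0(1)] D_def power_divide)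
    have s2: "Sv = K^2 * ((real n + 1) * harm n - real n) + real n * err n"
    proof -
      have "Sv = (\<Sum>v=1..n. K^2 * ((real n + 1 - real v) / real v)) + (\<Sum>v=1..n. (real n + 1 - real v) * (EE t H \<alpha> l (n+l) (int v) ^ 2 - K^2 / real v))"
        unfolding Sv_def sum.distrib[symmetric] by (intro sum.cong refl) (simp add: algebra_simps)
      also have "(\<Sum>v=1..n. K^2 * ((real n + 1 - real v) / real v)) = K^2 * ((real n + 1) * harm n - real n)"
        unfolding sum_distrib_left[symmetric] harm_sum ..
      also have "(\<Sum>v=1..n. (real n + 1 - real v) * (EE t H \<alpha> l (n+l) (int v) ^ 2 - K^2 / real v)) = real n * err n"
        unfolding err_def using np by simp
      finally show ?thesis .
    qed
    have "Y (n+l) = ((1 / (real (n+l) - real l)) * (\<Sum>i=l..n+l. \<Sum>j=l..n+l. rhoN t H \<alpha> l (n+l) (int j - int i) ^ 2)) / ln (real n)"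
      unfolding Y_def by simp
    also have "\<dots> = ((real n + 1) / real n + 2 * (Sv / (real n * (D n)^2))) / ln (real n)"
      unfolding X s1 ..
    also have "\<dots> = ((real n + 1) / real n) / ln (real n) + 2 * inverse ((D n)^2) * (K^2 * HH n + err n / ln (real n))"
      unfolding s2 HH_def using np lnp Dnz by (simp add: field_simps)
    finally show ?thesis .
  qed
  define c where "c = 2 * inverse (A0^2) * (K^2 * 1 + 0)"
  have cpos: "c > 0" unfolding c_def using K A0 by simp
  have lim1: "(\<lambda>n. ((real n + 1) / real n) / ln (real n)) \<longlonglongrightarrow> 0" by real_asymp
  have limD: "D \<longlonglongrightarrow> A0" unfolding D_def A0_def by (rule LIMSEQ_ignore_initial_segment[OF EE_lim])
  have limHH: "HH \<longlonglongrightarrow> 1" unfolding HH_def by (rule HH_lim)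
  have limerr: "(\<lambda>n. err n / ln (real n)) \<longlonglongrightarrow> 0"
  proof (rule Lim_null_comparison)
    show "\<forall>\<^sub>F n in sequentially. norm (err n / ln (real n)) \<le> 2 * (CQ * Z + C2) * (1 / ln (real n))"
      unfolding eventually_sequentially
    proof (intro exI allI impI)
      fix n :: nat assume n: "n \<ge> 2"
      then have lnp: "ln (real n) > 0" by simp
      have "\<bar>err n\<bar> \<le> 2 * (CQ * Z + C2)" using err_b n by simp
      then show "norm (err n / ln (real n)) \<le> 2 * (CQ * Z + C2) * (1 / ln (real n))"
        using lnp by (simp add: abs_divide divide_right_mono)
    qed
    have "(\<lambda>n. 1 / ln (real n)) \<longlonglongrightarrow> (0::real)" by real_asymp
    then show "(\<lambda>n. 2 * (CQ * Z + C2) * (1 / ln (real n))) \<longlonglongrightarrow> 0"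
      by (rule tendsto_mult_right_zero)
  qed
  have "(\<lambda>n. ((real n + 1) / real n) / ln (real n) + 2 * inverse ((D n)^2) * (K^2 * HH n + err n / ln (real n)))
        \<longlonglongrightarrow> 0 + 2 * inverse (A0^2) * (K^2 * 1 + 0)"
    using A0 by (intro tendsto_intros lim1 limD limHH limerr) auto
  then have "(\<lambda>n. Y (n + l)) \<longlonglongrightarrow> c"
    unfolding c_def
    using tendsto_cong[of "\<lambda>n. Y (n + l)" "\<lambda>n. ((real n + 1) / real n) / ln (real n) + 2 * inverse ((D n)^2) * (K^2 * HH n + err n / ln (real n))"]
      Yeq eventually_ge_at_top[of "max N1 2"]
    by (smt (verit) eventually_mono)
  then have "Y \<longlonglongrightarrow> c" by (rule LIMSEQ_offset)
  then show ?thesis using cpos unfolding Y_def by blast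
qed


theorem mainTheorem1:
  fixes t H :: real and \<alpha> :: "nat \<Rightarrow> real" and l p q :: nat
  assumes "1/2 < H" "H < 1" "t > 1"
    and "is_filter \<alpha> l p" "p \<ge> 1" "q \<ge> 1"
  shows "(H < real p - 1 / (4 * real q) \<longrightarrow>
           (\<exists>S. ((\<lambda>v. phi H \<alpha> l v ^ (2 * q)) has_sum S) UNIV \<and>
                ((\<lambda>N. (1 / (real N - real l)) *
                    (\<Sum>i=l..N. \<Sum>j=l..N. rhoN t H \<alpha> l N (int j - int i) ^ (2 * q)))
                 \<longlonglongrightarrow> S)))
       \<and> (p = 1 \<and> H = 3/4 \<longrightarrow>
           (\<exists>c > 0. (\<lambda>N. (1 / ((real N - real l) * ln (real N - real l))) *
                    (\<Sum>i=l..N. \<Sum>j=l..N. rhoN t H \<alpha> l N (int j - int i) ^ 2))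
                 \<longlonglongrightarrow> c))"
proof (intro conjI impI)
  assume "H < real p - 1 / (4 * real q)"
  then show "\<exists>S. ((\<lambda>v. phi H \<alpha> l v ^ (2 * q)) has_sum S) UNIV \<and>
                ((\<lambda>N. (1 / (real N - real l)) *
                    (\<Sum>i=l..N. \<Sum>j=l..N. rhoN t H \<alpha> l N (int j - int i) ^ (2 * q)))
                 \<longlonglongrightarrow> S)"
    by (rule part1[OF assms])
next
  assume h: "p = 1 \<and> H = 3/4"
  show "\<exists>c > 0. (\<lambda>N. (1 / ((real N - real l) * ln (real N - real l))) *
                    (\<Sum>i=l..N. \<Sum>j=l..N. rhoN t H \<alpha> l N (int j - int i) ^ 2))
                 \<longlonglongrightarrow> c"
    using part2[OF assms(3) assms(4)] h by blast
qed

end
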